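(* Assume the Hamiltonian is thermodynamically stable. Let $R\ge1$, let $G$ be an observable of $R$ replicas, and let $0<\beta_1<\beta_2$. Then, in the thermodynamic limit $|\Lambda|\to\infty$, $\int_{\beta_1}^{\beta_2}\Delta_2 G\,d\beta\to0$, where $$\Delta_2 G=\sum_{l=1}^{R}\Big(\mathrm{Av}\big(\Omega_R[h(\sigma^{(l)})]\,\Omega_R[G]\big)-\mathrm{Av}\big(\Omega_R[h(\sigma^{(l)})]\big)\,\mathrm{Av}\big(\Omega_R[G]\big)\Big),\qquad h(\sigma)=H_\Lambda(\sigma)/|\Lambda|.$$
   Context: For each finite $d$-dimensional parallelepiped $\Lambda\subset\mathbb{Z}^d$ let $\Sigma_\Lambda=\{-1,1\}^\Lambda$, and for $X\subset\Lambda$ let $\sigma_X=\prod_{i\in X}\sigma_i$ (with $\sigma_\emptyset=0$). Let $\{J_X\}$ be independent centered Gaussian random variables with variances $\mathrm{Av}(J_X^2)=\Delta_X^2$, translation invariant, where $\mathrm{Av}$ denotes expectation over the $J$'s. The Hamiltonian is $H_\Lambda(\sigma)=-\sum_{X\subset\Lambda}J_X\sigma_X$, with normalized covariance $c_\Lambda(\sigma,\tau)=\frac{1}{|\Lambda|}\sum_{X\subset\Lambda}\Delta_X^2\sigma_X\tau_X$. The Hamiltonian is thermodynamically stable if there is $\bar c<\infty$ with $\sup_{\Lambda}\frac{1}{|\Lambda|}\sum_{X\subset\Lambda}\Delta_X^2\le\bar c$. Let $\mathcal{Z}(\beta)=\sum_{\sigma}e^{-\beta H_\Lambda(\sigma)}$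 and the $R$-replica random Gibbs state $\Omega_R(f)=\sum_{\sigma^{(1)},\dots,\sigma^{(R)}}f\,e^{-\beta\sum_{i=1}^R H_\Lambda(\sigma^{(i)})}/\mathcal{Z}(\beta)^R$. An observable of $R$ replicas is a smooth function $G$ of an $R\times R$ real matrix with $|G|\le1$, evaluated at $(c_\Lambda(\sigma^{(k)},\sigma^{(l)}))_{k,l\le R}$. The thermodynamic limit is the limit along boxes $\Lambda$ with $|\Lambda|\to\infty$. *)

theory Defs
  imports "HOL-Probability.Probability"
begin

definition dirder :: "'a::real_normed_vector \<Rightarrow> ('a \<Rightarrow> real) \<Rightarrow> 'a \<Rightarrow> real" where
  "dirder v f x = (THE d. ((\<lambda>t. f (x + t *\<^sub>R v)) has_real_derivative d) (at 0))"

fun iterdir :: "'a::real_normed_vector list \<Rightarrow> ('a \<Rightarrow> real) \<Rightarrow> 'a \<Rightarrow> real" where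
  "iterdir [] f = f"
| "iterdir (v # vs) f = dirder v (iterdir vs f)"

definition smooth :: "('a::real_normed_vector \<Rightarrow> real) \<Rightarrow> bool" where
  "smooth f \<longleftrightarrow> (\<forall>vs. continuous_on UNIV (iterdir vs f) \<and>
      (\<forall>v x. (\<lambda>t. iterdir vs f (x + t *\<^sub>R v)) differentiable (at 0)))"

text \<open>Sites of Z^d are functions 'd \<Rightarrow> int with 'd a finite type, d = CARD('d).\<close>

definition is_box :: "('d::finite \<Rightarrow> int) set \<Rightarrow> bool" where
  "is_box \<Lambda> \<longleftrightarrow> (\<exists>a b. \<Lambda> = {x. \<forall>i. a i \<le> x i \<and> x i \<le> b i})"

definition translation_invariant :: "(('d \<Rightarrow> int) set \<Rightarrow> real) \<Rightarrow> bool" where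
  "translation_invariant Delta \<longleftrightarrow>
     (\<forall>X t. Delta ((\<lambda>x i. x i + t i) ` X) = Delta X)"

definition thermo_stable :: "(('d::finite \<Rightarrow> int) set \<Rightarrow> real) \<Rightarrow> bool" where
  "thermo_stable Delta \<longleftrightarrow> (\<exists>cbar. \<forall>\<Lambda>. is_box \<Lambda> \<longrightarrow>
      (1 / real (card \<Lambda>)) * (\<Sum>X\<in>Pow \<Lambda>. (Delta X)\<^sup>2) \<le> cbar)"

text \<open>Disorder: J_X = Delta X * g X with g X i.i.d. standard Gaussians, X \<subseteq> \<Lambda>.\<close>
definition Jmeasure :: "'s set \<Rightarrow> ('s set \<Rightarrow> real) measure" where
  "Jmeasure \<Lambda> = PiM (Pow \<Lambda>) (\<lambda>_. density lborel std_normal_density)"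

definition Av :: "'s set \<Rightarrow> (('s set \<Rightarrow> real) \<Rightarrow> real) \<Rightarrow> real" where
  "Av \<Lambda> F = integral\<^sup>L (Jmeasure \<Lambda>) F"

definition configs :: "'s set \<Rightarrow> ('s \<Rightarrow> real) set" where
  "configs \<Lambda> = PiE \<Lambda> (\<lambda>_. {-1, 1})"

definition spinprod :: "('s \<Rightarrow> real) \<Rightarrow> 's set \<Rightarrow> real" where
  "spinprod \<sigma> X = (if X = {} then 0 else (\<Prod>i\<in>X. \<sigma> i))"

definition Ham :: "'s set \<Rightarrow> ('s set \<Rightarrow> real) \<Rightarrow> ('s set \<Rightarrow> real) \<Rightarrow> ('s \<Rightarrow> real) \<Rightarrow> real" where
  "Ham \<Lambda> Delta g \<sigma> = - (\<Sum>X\<in>Pow \<Lambda>. Delta X * g X * spinprod \<sigma> X)"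

definition cov :: "'s set \<Rightarrow> ('s set \<Rightarrow> real) \<Rightarrow> ('s \<Rightarrow> real) \<Rightarrow> ('s \<Rightarrow> real) \<Rightarrow> real" where
  "cov \<Lambda> Delta \<sigma> \<tau> = (1 / real (card \<Lambda>)) *
      (\<Sum>X\<in>Pow \<Lambda>. (Delta X)\<^sup>2 * spinprod \<sigma> X * spinprod \<tau> X)"

definition Zpart :: "'s set \<Rightarrow> ('s set \<Rightarrow> real) \<Rightarrow> real \<Rightarrow> ('s set \<Rightarrow> real) \<Rightarrow> real" where
  "Zpart \<Lambda> Delta \<beta> g = (\<Sum>\<sigma>\<in>configs \<Lambda>. exp (- \<beta> * Ham \<Lambda> Delta g \<sigma>))"

text \<open>R-replica random Gibbs state, replicas indexed by the finite type 'r, R = CARD('r).\<close>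
definition Omega :: "'s set \<Rightarrow> ('s set \<Rightarrow> real) \<Rightarrow> real \<Rightarrow> ('s set \<Rightarrow> real)
     \<Rightarrow> (('r::finite \<Rightarrow> 's \<Rightarrow> real) \<Rightarrow> real) \<Rightarrow> real" where
  "Omega \<Lambda> Delta \<beta> g F =
     (\<Sum>s\<in>PiE (UNIV :: 'r set) (\<lambda>_. configs \<Lambda>).
        F s * exp (- \<beta> * (\<Sum>k\<in>UNIV. Ham \<Lambda> Delta g (s k))))
     / (Zpart \<Lambda> Delta \<beta> g) ^ CARD('r)"

text \<open>Observable G evaluated on the replica overlap matrix.\<close>
definition obs :: "'s set \<Rightarrow> ('s set \<Rightarrow> real) \<Rightarrow> (real^'r^'r \<Rightarrow> real)
     \<Rightarrow> ('r::finite \<Rightarrow> 's \<Rightarrow> real) \<Rightarrow> real" where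
  "obs \<Lambda> Delta G s = G (\<chi> k l. cov \<Lambda> Delta (s k) (s l))"

definition Delta2 :: "'s set \<Rightarrow> ('s set \<Rightarrow> real) \<Rightarrow> (real^'r^'r \<Rightarrow> real) \<Rightarrow> real \<Rightarrow> real" where
  "Delta2 \<Lambda> Delta G \<beta> =
     (\<Sum>l\<in>(UNIV :: 'r::finite set).
        Av \<Lambda> (\<lambda>g. Omega \<Lambda> Delta \<beta> g (\<lambda>s. Ham \<Lambda> Delta g (s l) / real (card \<Lambda>))
                 * Omega \<Lambda> Delta \<beta> g (obs \<Lambda> Delta G))
      - Av \<Lambda> (\<lambda>g. Omega \<Lambda> Delta \<beta> g (\<lambda>s. Ham \<Lambda> Delta g (s l) / real (card \<Lambda>)))
        * Av \<Lambda> (\<lambda>g. Omega \<Lambda> Delta \<beta> g (obs \<Lambda> Delta G)))"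

end

theory Submission
  imports Defs
begin

definition GN :: "real measure" where "GN = density lborel std_normal_density"

lemma GN_prob: "prob_space GN"
  unfolding GN_def by (rule prob_space_normal_density) simp

lemma space_GN[simp]: "space GN = UNIV" and sets_GN[simp, measurable_cong]: "sets GN = sets borel"
  by (auto simp: GN_def)

lemma GN_integral: "f \<in> borel_measurable borel \<Longrightarrow> integral\<^sup>L GN f = (\<integral>x. std_normal_density x * f x \<partial>lborel)"
  unfolding GN_def by (subst integral_density) auto

lemma GN_integrable: "f \<in> borel_measurable borel \<Longrightarrow> integrable GN f = integrable lborel (\<lambda>x. std_normal_density x * f x)"
  unfolding GN_def by (subst integrable_density) auto

lemma GN_int_pow: "integrable GN (\<lambda>x. x ^ k)"
  by (subst GN_integrable) (auto intro: integrable_std_normal_moment)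

lemma GN_int_abs: "integrable GN (\<lambda>x. \<bar>x\<bar>)"
  using integrable_std_normal_moment_abs[of 1] by (subst GN_integrable) auto

lemma GN_mean: "integral\<^sup>L GN (\<lambda>x. x) = 0"
  using std_normal_moment_odd[of 0] by (subst GN_integral) (auto dest: has_bochner_integral_integral_eq)

lemma GN_second: "integral\<^sup>L GN (\<lambda>x. x^2) = 1"
  using std_normal_moment_even[of 1] by (subst GN_integral) (auto dest: has_bochner_integral_integral_eq)

lemma GN_mgf_aux: "std_normal_density x * exp (t * x) = exp (t^2/2) * normal_density t 1 x"
  proof -
  have "exp (t * x) * exp (- (x * x / 2)) = exp (t * t / 2) * exp ((t * (x * 2) - (t * t + x * x)) / 2)"
    unfolding exp_add[symmetric] by (rule arg_cong[where f=exp]) (simp add: field_simps)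
  then show ?thesis unfolding normal_density_def by (simp add: power2_eq_square field_simps)
qed

lemma GN_mgf_int: "integrable GN (\<lambda>x. exp (t * x))"
  by (subst GN_integrable) (auto simp: GN_mgf_aux)

lemma GN_mgf: "integral\<^sup>L GN (\<lambda>x. exp (t * x)) = exp (t^2/2)"
  by (subst GN_integral) (auto simp: GN_mgf_aux)

lemma sqb: "\<bar>a\<bar> \<le> T \<Longrightarrow> \<bar>a\<^sup>2\<bar> \<le> (T::real)\<^sup>2"
  by (metis abs_ge_zero abs_power2 order_trans power2_abs power_mono)

lemma GN_measure_UNIV[simp]: "measure GN UNIV = 1"
  using prob_space.prob_space[OF GN_prob] by simp

lemma GN_bounded_int:
  fixes f :: "real \<Rightarrow> real" and T :: real
  assumes "f \<in> borel_measurable GN" "\<And>x. \<bar>f x\<bar> \<le> T"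
  shows "integrable GN f"
proof -
  interpret prob_space GN by (rule GN_prob)
  show ?thesis using assms by (intro integrable_const_bound[where B=T]) auto
qed

lemma GN_var_lip:
  fixes \<phi> :: "real \<Rightarrow> real"
  assumes m: "\<phi> \<in> borel_measurable GN" and bd: "\<And>x. \<bar>\<phi> x\<bar> \<le> T"
    and lip: "\<And>a b. \<bar>\<phi> a - \<phi> b\<bar> \<le> L * \<bar>a - b\<bar>"
  shows "integral\<^sup>L GN (\<lambda>x. (\<phi> x)\<^sup>2) - (integral\<^sup>L GN \<phi>)\<^sup>2 \<le> L\<^sup>2"
proof -
  interpret prob_space GN by (rule GN_prob)
  have m': "\<phi> \<in> borel_measurable GN" using m by simp
  have i1: "integrable GN \<phi>" by (rule GN_bounded_int[OF m' bd])
  have i2: "integrable GN (\<lambda>x. (\<phi> x)\<^sup>2)"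
    by (rule GN_bounded_int[where T="T\<^sup>2"]) (use m' in simp, rule sqb[OF bd])
  have i3: "integrable GN (\<lambda>x. x\<^sup>2)" using GN_int_pow[of 2] by simp
  define c where "c = \<phi> 0"
  have "integral\<^sup>L GN (\<lambda>x. (\<phi> x - c)\<^sup>2) = integral\<^sup>L GN (\<lambda>x. (\<phi> x)\<^sup>2 - 2 * c * \<phi> x + c\<^sup>2)"
    by (simp add: power2_diff algebra_simps)
  also have "\<dots> = integral\<^sup>L GN (\<lambda>x. (\<phi> x)\<^sup>2) - 2 * c * integral\<^sup>L GN \<phi> + c\<^sup>2"
    using i1 i2 prob_space by simp
  finally have eq: "integral\<^sup>L GN (\<lambda>x. (\<phi> x - c)\<^sup>2) = integral\<^sup>L GN (\<lambda>x. (\<phi> x)\<^sup>2) - 2 * c * integral\<^sup>L GN \<phi> + c\<^sup>2" .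
  have "integral\<^sup>L GN (\<lambda>x. (\<phi> x - c)\<^sup>2) \<le> integral\<^sup>L GN (\<lambda>x. L\<^sup>2 * x\<^sup>2)"
  proof (rule integral_mono)
    show "integrable GN (\<lambda>x. (\<phi> x - c)\<^sup>2)"
    proof (rule GN_bounded_int[where T="(T+\<bar>c\<bar>)\<^sup>2"])
      show "(\<lambda>x. (\<phi> x - c)\<^sup>2) \<in> borel_measurable GN" using m' by simp
      fix x have "\<bar>\<phi> x - c\<bar> \<le> T + \<bar>c\<bar>" using bd[of x] by arith
      then show "\<bar>(\<phi> x - c)\<^sup>2\<bar> \<le> (T+\<bar>c\<bar>)\<^sup>2" by (rule sqb)
    qed
    show "integrable GN (\<lambda>x. L\<^sup>2 * x\<^sup>2)" using i3 by simp
    fix x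
    have "\<bar>\<phi> x - c\<bar> \<le> L * \<bar>x\<bar>" using lip[of x 0] by (simp add: c_def)
    then have "\<bar>\<phi> x - c\<bar>\<^sup>2 \<le> (L * \<bar>x\<bar>)\<^sup>2" by (rule power_mono) simp
    then show "(\<phi> x - c)\<^sup>2 \<le> L\<^sup>2 * x\<^sup>2" by (simp add: power_mult_distrib)
  qed
  also have "\<dots> = L\<^sup>2" using GN_second by simp
  finally have "integral\<^sup>L GN (\<lambda>x. (\<phi> x)\<^sup>2) - 2 * c * integral\<^sup>L GN \<phi> + c\<^sup>2 \<le> L\<^sup>2" using eq by simp
  moreover have "0 \<le> (integral\<^sup>L GN \<phi> - c)\<^sup>2" by simp
  moreover have "(integral\<^sup>L GN \<phi> - c)\<^sup>2 = (integral\<^sup>L GN \<phi>)\<^sup>2 - 2 * c * integral\<^sup>L GN \<phi> + c\<^sup>2"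
    by (simp add: power2_diff algebra_simps)
  ultimately show ?thesis by linarith
qed

lemma pps_GN: "product_prob_space (\<lambda>_. GN)"
proof -
  interpret prob_space GN by (rule GN_prob)
  show ?thesis
    by (unfold_locales; simp add: GN_prob prob_space_axioms sigma_finite_measure_axioms)
qed

lemma PiGN_prob: "prob_space (PiM I (\<lambda>_. GN))" if "finite I"
proof -
  interpret product_prob_space "\<lambda>_. GN" I by (rule pps_GN)
  interpret finite_product_prob_space "\<lambda>_. GN" I by unfold_locales (rule that)
  show ?thesis by (rule prob_space_axioms)
qed

lemma PiGN_bounded_int:
  fixes f :: "('i \<Rightarrow> real) \<Rightarrow> real" and T :: real
  assumes "finite I" "f \<in> borel_measurable (PiM I (\<lambda>_. GN))" "\<And>x. x \<in> space (PiM I (\<lambda>_. GN)) \<Longrightarrow> \<bar>f x\<bar> \<le> T"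
  shows "integrable (PiM I (\<lambda>_. GN)) f"
proof -
  interpret prob_space "PiM I (\<lambda>_. GN)" by (rule PiGN_prob) fact
  show ?thesis using assms by (intro integrable_const_bound[where B=T]) auto
qed

lemma add_dim_meas:
  fixes F :: "('i \<Rightarrow> real) \<Rightarrow> real"
  assumes Fm: "F \<in> borel_measurable (PiM (insert i I) (\<lambda>_. GN))"
  shows "(\<lambda>(x, y). F (x(i := y))) \<in> borel_measurable (PiM I (\<lambda>_. GN) \<Otimes>\<^sub>M GN)"
proof -
  have a: "(\<lambda>(x, y). x(i := y)) \<in> measurable (PiM I (\<lambda>_. GN) \<Otimes>\<^sub>M GN) (PiM (insert i I) (\<lambda>_. GN))"
    by (rule measurable_add_dim)
  have "F \<circ> (\<lambda>(x, y). x(i := y)) \<in> borel_measurable (PiM I (\<lambda>_. GN) \<Otimes>\<^sub>M GN)"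
    by (rule measurable_comp[OF a Fm])
  then show ?thesis by (simp add: comp_def case_prod_unfold)
qed

lemma tensor_var:
  fixes F :: "('i \<Rightarrow> real) \<Rightarrow> real"
  assumes "finite I"
  shows "F \<in> borel_measurable (PiM I (\<lambda>_. GN)) \<Longrightarrow>
    (\<And>x. x \<in> space (PiM I (\<lambda>_. GN)) \<Longrightarrow> \<bar>F x\<bar> \<le> T) \<Longrightarrow>
    (\<And>x j a b. x \<in> space (PiM I (\<lambda>_. GN)) \<Longrightarrow> j \<in> I \<Longrightarrow> \<bar>F (x(j:=a)) - F (x(j:=b))\<bar> \<le> L j * \<bar>a - b\<bar>) \<Longrightarrow>
    integral\<^sup>L (PiM I (\<lambda>_. GN)) (\<lambda>x. (F x)\<^sup>2) - (integral\<^sup>L (PiM I (\<lambda>_. GN)) F)\<^sup>2 \<le> (\<Sum>j\<in>I. (L j)\<^sup>2)"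
using assms proof (induction I arbitrary: F rule: finite_induct)
  case empty
  have "integral\<^sup>L (PiM {} (\<lambda>_. GN)) (\<lambda>x. (F x)\<^sup>2) = (F (\<lambda>_. undefined))\<^sup>2"
    by (simp add: PiM_empty lebesgue_integral_count_space_finite)
  moreover have "integral\<^sup>L (PiM {} (\<lambda>_. GN)) F = F (\<lambda>_. undefined)"
    by (simp add: PiM_empty lebesgue_integral_count_space_finite)
  ultimately show ?case by simp
next
  case (insert i I)
  interpret product_prob_space "\<lambda>_. GN" I by (rule pps_GN)
  let ?M = "PiM I (\<lambda>_. GN)" and ?M' = "PiM (insert i I) (\<lambda>_. GN)"
  have Fm[measurable]: "F \<in> borel_measurable ?M'" by fact
  have Fbd: "\<And>x. x \<in> space ?M' \<Longrightarrow> \<bar>F x\<bar> \<le> T" by fact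
  have Flip: "\<And>x j a b. x \<in> space ?M' \<Longrightarrow> j \<in> insert i I \<Longrightarrow> \<bar>F (x(j:=a)) - F (x(j:=b))\<bar> \<le> L j * \<bar>a - b\<bar>" by fact
  have sp: "x(i:=y) \<in> space ?M'" if "x \<in> space ?M" for x y
    using that by (auto simp: space_PiM PiE_def extensional_def)
  have mi: "(\<lambda>y. F (x(i:=y))) \<in> borel_measurable GN" if "x \<in> space ?M" for x
    using measurable_comp[OF measurable_component_update Fm, OF that \<open>i \<notin> I\<close>] by (simp add: comp_def fun_upd_def)
  define G where "G x = integral\<^sup>L GN (\<lambda>y. F (x(i:=y)))" for x
  have Gm: "G \<in> borel_measurable ?M"
    unfolding G_def
  proof (rule sigma_finite_measure.borel_measurable_lebesgue_integral)
    show "sigma_finite_measure GN" using GN_prob prob_space_imp_sigma_finite by blast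
    show "(\<lambda>(x, y). F (x(i := y))) \<in> borel_measurable (?M \<Otimes>\<^sub>M GN)"
      by (rule add_dim_meas[OF Fm])
  qed
  have intx: "integrable GN (\<lambda>y. F (x(i:=y)))" if "x \<in> space ?M" for x
    using mi[OF that] Fbd[OF sp[OF that]] by (intro GN_bounded_int[where T=T]) auto
  have Gbd: "\<bar>G x\<bar> \<le> T" if "x \<in> space ?M" for x
  proof -
    interpret prob_space GN by (rule GN_prob)
    have "\<bar>G x\<bar> \<le> integral\<^sup>L GN (\<lambda>y. \<bar>F (x(i:=y))\<bar>)"
      unfolding G_def by (rule integral_abs_bound)
    also have "\<dots> \<le> integral\<^sup>L GN (\<lambda>y. T)"
      using intx[OF that] Fbd[OF sp[OF that]] by (intro integral_mono) auto
    also have "\<dots> = T" by simp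
    finally show ?thesis .
  qed
  have Glip: "\<bar>G (x(j:=a)) - G (x(j:=b))\<bar> \<le> L j * \<bar>a - b\<bar>" if x: "x \<in> space ?M" and j: "j \<in> I" for x j a b
  proof -
    interpret prob_space GN by (rule GN_prob)
    have xa: "x(j:=a) \<in> space ?M" and xb: "x(j:=b) \<in> space ?M" using x j by (auto simp: space_PiM PiE_def extensional_def)
    have ij: "i \<noteq> j" using j insert by auto
    have "G (x(j:=a)) - G (x(j:=b)) = integral\<^sup>L GN (\<lambda>y. F (x(j:=a,i:=y)) - F (x(j:=b,i:=y)))"
      unfolding G_def using intx[OF xa] intx[OF xb] by simp
    also have "\<bar>\<dots>\<bar> \<le> integral\<^sup>L GN (\<lambda>y. \<bar>F (x(j:=a,i:=y)) - F (x(j:=b,i:=y))\<bar>)"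
      by (rule integral_abs_bound)
    also have "\<dots> \<le> integral\<^sup>L GN (\<lambda>y. L j * \<bar>a - b\<bar>)"
    proof (rule integral_mono)
      show "integrable GN (\<lambda>y. \<bar>F (x(j:=a,i:=y)) - F (x(j:=b,i:=y))\<bar>)" using intx[OF xa] intx[OF xb] by simp
      fix y
      have "x(j:=a,i:=y) = (x(i:=y))(j:=a)" "x(j:=b,i:=y) = (x(i:=y))(j:=b)" using ij by (auto simp: fun_upd_twist)
      moreover have "x(i:=y) \<in> space ?M'" by (rule sp[OF x])
      then have "\<bar>F ((x(i:=y))(j:=a)) - F ((x(i:=y))(j:=b))\<bar> \<le> L j * \<bar>a - b\<bar>"
        using j by (intro Flip) auto
      ultimately show "\<bar>F (x(j:=a,i:=y)) - F (x(j:=b,i:=y))\<bar> \<le> L j * \<bar>a - b\<bar>"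
        by simp
    qed simp
    finally show ?thesis by simp
  qed
  have IH: "integral\<^sup>L ?M (\<lambda>x. (G x)\<^sup>2) - (integral\<^sup>L ?M G)\<^sup>2 \<le> (\<Sum>j\<in>I. (L j)\<^sup>2)"
    using insert.IH[OF Gm Gbd Glip] by blast
  have vx: "integral\<^sup>L GN (\<lambda>y. (F (x(i:=y)))\<^sup>2) \<le> (G x)\<^sup>2 + (L i)\<^sup>2" if x: "x \<in> space ?M" for x
  proof -
    have "integral\<^sup>L GN (\<lambda>y. (F (x(i:=y)))\<^sup>2) - (G x)\<^sup>2 \<le> (L i)\<^sup>2"
      unfolding G_def
    proof (rule GN_var_lip[OF mi[OF x]])
      show "\<bar>F (x(i := y))\<bar> \<le> T" for y using Fbd[OF sp[OF x]] .
      fix a b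
      have "x(i:=a) = (x(i:=0))(i:=a)" "x(i:=b) = (x(i:=0))(i:=b)" by auto
      moreover have "x(i:=0) \<in> space ?M'" by (rule sp[OF x])
      then have "\<bar>F ((x(i:=0))(i:=a)) - F ((x(i:=0))(i:=b))\<bar> \<le> L i * \<bar>a - b\<bar>"
        by (intro Flip) auto
      ultimately show "\<bar>F (x(i := a)) - F (x(i := b))\<bar> \<le> L i * \<bar>a - b\<bar>"
        by simp
    qed
    then show ?thesis by simp
  qed
  have iF: "integrable ?M' F" using Fm Fbd by (intro PiGN_bounded_int[where T=T]) (use insert in auto)
  have iF2: "integrable ?M' (\<lambda>x. (F x)\<^sup>2)" using Fm Fbd
    by (intro PiGN_bounded_int[where T="T\<^sup>2"]) (use insert in simp, simp, rule sqb, simp)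
  have e1: "integral\<^sup>L ?M' F = integral\<^sup>L ?M G"
    unfolding G_def by (rule product_integral_insert[OF insert(1,2) iF])
  have e2: "integral\<^sup>L ?M' (\<lambda>x. (F x)\<^sup>2) = integral\<^sup>L ?M (\<lambda>x. integral\<^sup>L GN (\<lambda>y. (F (x(i:=y)))\<^sup>2))"
    by (rule product_integral_insert[OF insert(1,2) iF2])
  have iG2: "integrable ?M (\<lambda>x. (G x)\<^sup>2)" using Gm Gbd
    by (intro PiGN_bounded_int[where T="T\<^sup>2"]) (use insert in simp, simp, rule sqb, simp)
  have "integral\<^sup>L ?M (\<lambda>x. integral\<^sup>L GN (\<lambda>y. (F (x(i:=y)))\<^sup>2)) \<le> integral\<^sup>L ?M (\<lambda>x. (G x)\<^sup>2 + (L i)\<^sup>2)"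
  proof (rule integral_mono_AE)
    have Hm: "(\<lambda>x. integral\<^sup>L GN (\<lambda>y. (F (x(i:=y)))\<^sup>2)) \<in> borel_measurable ?M"
    proof (rule sigma_finite_measure.borel_measurable_lebesgue_integral)
      show "sigma_finite_measure GN" using GN_prob prob_space_imp_sigma_finite by blast
      have Fm2: "(\<lambda>x. (F x)\<^sup>2) \<in> borel_measurable ?M'" using Fm by measurable
      show "(\<lambda>(x, y). (F (x(i := y)))\<^sup>2) \<in> borel_measurable (?M \<Otimes>\<^sub>M GN)"
        using add_dim_meas[OF Fm2] by simp
    qed
    show "integrable ?M (\<lambda>x. integral\<^sup>L GN (\<lambda>y. (F (x(i:=y)))\<^sup>2))"
    proof (rule PiGN_bounded_int[where T="T\<^sup>2 + (L i)\<^sup>2"])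
      show "finite I" by (rule insert(1))
      show "(\<lambda>x. integral\<^sup>L GN (\<lambda>y. (F (x(i:=y)))\<^sup>2)) \<in> borel_measurable ?M" by (rule Hm)
      fix x assume x: "x \<in> space ?M"
      have "\<bar>(G x)\<^sup>2\<bar> \<le> T\<^sup>2" by (rule sqb[OF Gbd[OF x]])
      then show "\<bar>integral\<^sup>L GN (\<lambda>y. (F (x(i:=y)))\<^sup>2)\<bar> \<le> T\<^sup>2 + (L i)\<^sup>2"
        using vx[OF x] integral_nonneg_AE[of "\<lambda>y. (F (x(i:=y)))\<^sup>2" GN] by simp
    qed
    show "integrable ?M (\<lambda>x. (G x)\<^sup>2 + (L i)\<^sup>2)"
      using iG2 PiGN_prob[OF insert(1)] by (simp add: prob_space.prob_space)
    show "AE x in ?M. integral\<^sup>L GN (\<lambda>y. (F (x(i:=y)))\<^sup>2) \<le> (G x)\<^sup>2 + (L i)\<^sup>2"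
      using vx by auto
  qed
  also have "\<dots> = integral\<^sup>L ?M (\<lambda>x. (G x)\<^sup>2) + (L i)\<^sup>2"
    using iG2 PiGN_prob[OF insert(1)] by (simp add: prob_space.prob_space)
  finally show ?case using e1 e2 IH insert by simp
qed

definition clamp :: "real \<Rightarrow> real \<Rightarrow> real" where "clamp T x = max (- T) (min T x)"

lemma clamp_lip: "\<bar>clamp T x - clamp T y\<bar> \<le> \<bar>x - y\<bar>"
  unfolding clamp_def by (auto simp: max_def min_def)

lemma clamp_bd: "0 \<le> T \<Longrightarrow> \<bar>clamp T x\<bar> \<le> T"
  unfolding clamp_def by (auto simp: max_def min_def)

lemma clamp_id: "\<bar>x\<bar> \<le> T \<Longrightarrow> clamp T x = x"
  unfolding clamp_def by (auto simp: max_def min_def)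

lemma clamp_diff: "\<bar>x - clamp T x\<bar> \<le> \<bar>x\<bar>" if "0 \<le> T"
  using that unfolding clamp_def by (auto simp: max_def min_def)

lemma clamp_meas[measurable]: "clamp T \<in> borel_measurable borel"
  unfolding clamp_def by measurable

lemma (in prob_space) abs_int_sq_le:
  fixes g :: "'a \<Rightarrow> real"
  assumes "integrable M g" "integrable M (\<lambda>x. (g x)\<^sup>2)"
  shows "(expectation (\<lambda>x. \<bar>g x\<bar>))\<^sup>2 \<le> expectation (\<lambda>x. (g x)\<^sup>2)"
proof -
  have "0 \<le> variance (\<lambda>x. \<bar>g x\<bar>)" by (rule variance_positive)
  also have "variance (\<lambda>x. \<bar>g x\<bar>) = expectation (\<lambda>x. (\<bar>g x\<bar>)\<^sup>2) - (expectation (\<lambda>x. \<bar>g x\<bar>))\<^sup>2"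
    by (rule variance_eq) (use assms in auto)
  finally show ?thesis by simp
qed

lemma L1_conc_bdd:
  fixes F :: "('i \<Rightarrow> real) \<Rightarrow> real"
  assumes I: "finite I" and Fm: "F \<in> borel_measurable (PiM I (\<lambda>_. GN))"
    and Fb: "\<And>x. x \<in> space (PiM I (\<lambda>_. GN)) \<Longrightarrow> \<bar>F x\<bar> \<le> T"
    and lip: "\<And>x j a b. x \<in> space (PiM I (\<lambda>_. GN)) \<Longrightarrow> j \<in> I \<Longrightarrow> \<bar>F (x(j:=a)) - F (x(j:=b))\<bar> \<le> L j * \<bar>a - b\<bar>"
  shows "integral\<^sup>L (PiM I (\<lambda>_. GN)) (\<lambda>x. \<bar>F x - integral\<^sup>L (PiM I (\<lambda>_. GN)) F\<bar>) \<le> sqrt (\<Sum>j\<in>I. (L j)\<^sup>2)"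
proof -
  let ?P = "PiM I (\<lambda>_. GN)"
  interpret P: prob_space ?P by (rule PiGN_prob[OF I])
  define m where "m = integral\<^sup>L ?P F"
  have iF: "integrable ?P F" by (rule PiGN_bounded_int[OF I Fm Fb])
  have iF2: "integrable ?P (\<lambda>x. (F x)\<^sup>2)"
    by (rule PiGN_bounded_int[OF I, where T="T\<^sup>2"]) (use Fm in simp, rule sqb[OF Fb])
  have v: "integral\<^sup>L ?P (\<lambda>x. (F x)\<^sup>2) - m\<^sup>2 \<le> (\<Sum>j\<in>I. (L j)\<^sup>2)"
    unfolding m_def by (rule tensor_var[OF I Fm Fb lip])
  have "P.variance F = integral\<^sup>L ?P (\<lambda>x. (F x)\<^sup>2) - m\<^sup>2"
    unfolding m_def by (rule P.variance_eq[OF iF iF2])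
  have i1: "integrable ?P (\<lambda>x. F x - m)" using iF by simp
  have i2: "integrable ?P (\<lambda>x. (F x - m)\<^sup>2)"
    using iF iF2 by (simp add: power2_diff)
  have "(integral\<^sup>L ?P (\<lambda>x. \<bar>F x - m\<bar>))\<^sup>2 \<le> integral\<^sup>L ?P (\<lambda>x. (F x - m)\<^sup>2)"
    by (rule P.abs_int_sq_le[OF i1 i2])
  also have "integral\<^sup>L ?P (\<lambda>x. (F x - m)\<^sup>2) = P.variance F" unfolding m_def ..
  also have "\<dots> \<le> (\<Sum>j\<in>I. (L j)\<^sup>2)" using v \<open>P.variance F = _\<close> by simp
  finally have "(integral\<^sup>L ?P (\<lambda>x. \<bar>F x - m\<bar>))\<^sup>2 \<le> (\<Sum>j\<in>I. (L j)\<^sup>2)" .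
  then have "sqrt ((integral\<^sup>L ?P (\<lambda>x. \<bar>F x - m\<bar>))\<^sup>2) \<le> sqrt (\<Sum>j\<in>I. (L j)\<^sup>2)"
    by (rule real_sqrt_le_mono)
  moreover have "0 \<le> integral\<^sup>L ?P (\<lambda>x. \<bar>F x - m\<bar>)" by simp
  ultimately show ?thesis unfolding m_def by simp
qed

lemma L1_conc:
  fixes F :: "('i \<Rightarrow> real) \<Rightarrow> real"
  assumes I: "finite I" and Fm: "F \<in> borel_measurable (PiM I (\<lambda>_. GN))"
    and iF: "integrable (PiM I (\<lambda>_. GN)) F"
    and lip: "\<And>x j a b. x \<in> space (PiM I (\<lambda>_. GN)) \<Longrightarrow> j \<in> I \<Longrightarrow> \<bar>F (x(j:=a)) - F (x(j:=b))\<bar> \<le> L j * \<bar>a - b\<bar>"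
  shows "integral\<^sup>L (PiM I (\<lambda>_. GN)) (\<lambda>x. \<bar>F x - integral\<^sup>L (PiM I (\<lambda>_. GN)) F\<bar>) \<le> sqrt (\<Sum>j\<in>I. (L j)\<^sup>2)"
proof -
  let ?P = "PiM I (\<lambda>_. GN)"
  let ?S = "sqrt (\<Sum>j\<in>I. (L j)\<^sup>2)"
  interpret P: prob_space ?P by (rule PiGN_prob[OF I])
  define m where "m = integral\<^sup>L ?P F"
  define Fn where "Fn n x = clamp (real n) (F x)" for n x
  have Fnm: "Fn n \<in> borel_measurable ?P" for n unfolding Fn_def using Fm by measurable
  have Fnb: "\<bar>Fn n x\<bar> \<le> real n" for n x unfolding Fn_def by (rule clamp_bd) simp
  have iFn: "integrable ?P (Fn n)" for n by (rule PiGN_bounded_int[OF I Fnm Fnb])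
  define a where "a n = integral\<^sup>L ?P (\<lambda>x. \<bar>F x - Fn n x\<bar>)" for n
  have ia: "integrable ?P (\<lambda>x. \<bar>F x - Fn n x\<bar>)" for n using iF iFn by simp
  have key: "integral\<^sup>L ?P (\<lambda>x. \<bar>F x - m\<bar>) - ?S \<le> 2 * a n" for n
  proof -
    define mn where "mn = integral\<^sup>L ?P (Fn n)"
    have c: "integral\<^sup>L ?P (\<lambda>x. \<bar>Fn n x - mn\<bar>) \<le> ?S"
      unfolding mn_def
    proof (rule L1_conc_bdd[OF I Fnm Fnb])
      fix x j a b assume "x \<in> space ?P" "j \<in> I"
      then have "\<bar>F (x(j:=a)) - F (x(j:=b))\<bar> \<le> L j * \<bar>a - b\<bar>" by (rule lip)
      then show "\<bar>Fn n (x(j:=a)) - Fn n (x(j:=b))\<bar> \<le> L j * \<bar>a - b\<bar>"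
        unfolding Fn_def using clamp_lip order_trans by blast
    qed
    have d: "\<bar>mn - m\<bar> \<le> a n"
    proof -
      have "mn - m = integral\<^sup>L ?P (\<lambda>x. Fn n x - F x)" unfolding mn_def m_def using iF iFn by simp
      also have "\<bar>\<dots>\<bar> \<le> integral\<^sup>L ?P (\<lambda>x. \<bar>Fn n x - F x\<bar>)" by (rule integral_abs_bound)
      also have "\<dots> = a n" unfolding a_def by (simp add: abs_minus_commute)
      finally show ?thesis .
    qed
    have "integral\<^sup>L ?P (\<lambda>x. \<bar>F x - m\<bar>) \<le> integral\<^sup>L ?P (\<lambda>x. \<bar>F x - Fn n x\<bar> + \<bar>Fn n x - mn\<bar> + \<bar>mn - m\<bar>)"
      by (rule integral_mono) (use iF iFn in auto)
    also have "\<dots> = a n + integral\<^sup>L ?P (\<lambda>x. \<bar>Fn n x - mn\<bar>) + \<bar>mn - m\<bar>"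
      unfolding a_def using iF iFn P.prob_space by simp
    finally show ?thesis using c d by simp
  qed
  have lim: "a \<longlonglongrightarrow> 0"
  proof -
    have "(\<lambda>n. integral\<^sup>L ?P (\<lambda>x. \<bar>F x - Fn n x\<bar>)) \<longlonglongrightarrow> integral\<^sup>L ?P (\<lambda>x. 0::real)"
    proof (rule integral_dominated_convergence[where w="\<lambda>x. \<bar>F x\<bar>"])
      show "(\<lambda>x. 0::real) \<in> borel_measurable ?P" by simp
      show "(\<lambda>x. \<bar>F x - Fn n x\<bar>) \<in> borel_measurable ?P" for n using Fm Fnm by measurable
      show "integrable ?P (\<lambda>x. \<bar>F x\<bar>)" using iF by simp
      show "AE x in ?P. (\<lambda>n. \<bar>F x - Fn n x\<bar>) \<longlonglongrightarrow> 0"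
      proof (rule AE_I2)
        fix x
        obtain N :: nat where N: "\<bar>F x\<bar> \<le> real N" using real_arch_simple by blast
        have "\<forall>n\<ge>N. \<bar>F x - Fn n x\<bar> = 0"
        proof (intro allI impI)
          fix n assume "N \<le> n"
          then have "\<bar>F x\<bar> \<le> real n" using N by (meson of_nat_le_iff order_trans)
          then show "\<bar>F x - Fn n x\<bar> = 0" unfolding Fn_def by (simp add: clamp_id)
        qed
        then show "(\<lambda>n. \<bar>F x - Fn n x\<bar>) \<longlonglongrightarrow> 0"
          by (intro tendsto_eventually) (auto simp: eventually_sequentially)
      qed
      show "AE x in ?P. norm \<bar>F x - Fn n x\<bar> \<le> \<bar>F x\<bar>" for n
        unfolding Fn_def using clamp_diff by auto
    qed
    then show ?thesis unfolding a_def by simp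
  qed
  have "(\<lambda>n. 2 * a n) \<longlonglongrightarrow> 0" using tendsto_mult_right_zero[OF lim, of 2] by simp
  then have "integral\<^sup>L ?P (\<lambda>x. \<bar>F x - m\<bar>) - ?S \<le> 0"
    by (rule LIMSEQ_le_const) (use key in auto)
  then show ?thesis unfolding m_def by simp
qed

lemma lse_lip:
  fixes c d :: "'s \<Rightarrow> real"
  assumes fin: "finite S" and ne: "S \<noteq> {}" and bd: "\<And>s. s \<in> S \<Longrightarrow> \<bar>c s - d s\<bar> \<le> K"
  shows "\<bar>ln (\<Sum>s\<in>S. exp (c s)) - ln (\<Sum>s\<in>S. exp (d s))\<bar> \<le> K"
proof -
  have pos: "0 < (\<Sum>s\<in>S. exp (f s))" for f :: "'s \<Rightarrow> real"
    using fin ne by (intro sum_pos) auto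
  have one: "ln (\<Sum>s\<in>S. exp (c s)) \<le> ln (\<Sum>s\<in>S. exp (d s)) + K" if bd: "\<And>s. s \<in> S \<Longrightarrow> \<bar>c s - d s\<bar> \<le> K" for c d :: "'s \<Rightarrow> real"
  proof -
    have "(\<Sum>s\<in>S. exp (c s)) \<le> (\<Sum>s\<in>S. exp (d s) * exp K)"
    proof (rule sum_mono)
      fix s assume "s \<in> S"
      then have "c s \<le> d s + K" using bd[of s] by arith
      then show "exp (c s) \<le> exp (d s) * exp K" by (simp add: exp_add[symmetric])
    qed
    also have "\<dots> = (\<Sum>s\<in>S. exp (d s)) * exp K" by (rule sum_distrib_right[symmetric])
    moreover have "0 < (\<Sum>s\<in>S. exp (d s)) * exp K" using pos[of d] by simp
    ultimately have "ln (\<Sum>s\<in>S. exp (c s)) \<le> ln ((\<Sum>s\<in>S. exp (d s)) * exp K)"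
      using pos[of c] by simp
    also have "\<dots> = ln (\<Sum>s\<in>S. exp (d s)) + K" using pos[of d] by (simp add: ln_mult)
    finally show ?thesis .
  qed
  have "ln (\<Sum>s\<in>S. exp (c s)) \<le> ln (\<Sum>s\<in>S. exp (d s)) + K" by (rule one[OF bd])
  moreover have "ln (\<Sum>s\<in>S. exp (d s)) \<le> ln (\<Sum>s\<in>S. exp (c s)) + K"
    by (rule one) (use bd in \<open>auto simp: abs_minus_commute\<close>)
  ultimately show ?thesis by arith
qed

locale gmodel =
  fixes S :: "'s set" and P :: "'i set" and a :: "'s \<Rightarrow> 'i \<Rightarrow> real" and A :: "'i \<Rightarrow> real"
  assumes finS: "finite S" and neS: "S \<noteq> {}" and finP: "finite P"
    and aA: "\<And>s X. s \<in> S \<Longrightarrow> X \<in> P \<Longrightarrow> \<bar>a s X\<bar> \<le> A X"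
begin

definition e :: "'s \<Rightarrow> ('i \<Rightarrow> real) \<Rightarrow> real" where "e s g = (\<Sum>X\<in>P. a s X * g X)"
definition Zf :: "real \<Rightarrow> ('i \<Rightarrow> real) \<Rightarrow> real" where "Zf \<beta> g = (\<Sum>s\<in>S. exp (\<beta> * e s g))"
definition lf :: "real \<Rightarrow> ('i \<Rightarrow> real) \<Rightarrow> real" where "lf \<beta> g = ln (Zf \<beta> g)"
definition Nf :: "real \<Rightarrow> ('i \<Rightarrow> real) \<Rightarrow> real" where "Nf \<beta> g = (\<Sum>s\<in>S. e s g * exp (\<beta> * e s g))"
definition N2 :: "real \<Rightarrow> ('i \<Rightarrow> real) \<Rightarrow> real" where "N2 \<beta> g = (\<Sum>s\<in>S. (e s g)\<^sup>2 * exp (\<beta> * e s g))"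
definition om :: "real \<Rightarrow> ('i \<Rightarrow> real) \<Rightarrow> real" where "om \<beta> g = Nf \<beta> g / Zf \<beta> g"
definition K :: real where "K = (\<Sum>X\<in>P. (A X)\<^sup>2)"
definition Ag :: "('i \<Rightarrow> real) \<Rightarrow> real" where "Ag g = (\<Sum>X\<in>P. A X * \<bar>g X\<bar>)"

lemma A_nonneg: "X \<in> P \<Longrightarrow> 0 \<le> A X"
  using aA neS by (meson abs_ge_zero all_not_in_conv order_trans)

lemma Zf_pos: "0 < Zf \<beta> g"
  unfolding Zf_def using finS neS by (intro sum_pos) auto

lemma e_bound: "s \<in> S \<Longrightarrow> \<bar>e s g\<bar> \<le> Ag g"
proof -
  assume s: "s \<in> S"
  have "\<bar>e s g\<bar> \<le> (\<Sum>X\<in>P. \<bar>a s X * g X\<bar>)" unfolding e_def by (rule sum_abs)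
  also have "\<dots> \<le> Ag g" unfolding Ag_def
    by (rule sum_mono) (use aA[OF s] in \<open>auto simp: abs_mult intro: mult_right_mono\<close>)
  finally show ?thesis .
qed

lemma Ag_nonneg: "0 \<le> Ag g"
  unfolding Ag_def using A_nonneg by (intro sum_nonneg) auto

lemma e_upd: "X \<in> P \<Longrightarrow> e s (g(X:=u)) - e s (g(X:=v)) = a s X * (u - v)"
proof -
  assume X: "X \<in> P"
  have "e s (g(X:=u)) - e s (g(X:=v)) = (\<Sum>Y\<in>P. a s Y * (g(X:=u)) Y - a s Y * (g(X:=v)) Y)"
    unfolding e_def by (simp add: sum_subtractf)
  also have "\<dots> = (\<Sum>Y\<in>P. if Y = X then a s X * (u - v) else 0)"
    by (rule sum.cong) (auto simp: algebra_simps)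
  also have "\<dots> = a s X * (u - v)" using X finP by simp
  finally show ?thesis .
qed

lemma lf_lip: "X \<in> P \<Longrightarrow> \<bar>lf \<beta> (g(X:=u)) - lf \<beta> (g(X:=v))\<bar> \<le> \<bar>\<beta>\<bar> * A X * \<bar>u - v\<bar>"
  unfolding lf_def Zf_def
proof (rule lse_lip[OF finS neS])
  fix s assume X: "X \<in> P" and s: "s \<in> S"
  have "\<beta> * e s (g(X:=u)) - \<beta> * e s (g(X:=v)) = \<beta> * (a s X * (u - v))"
    using e_upd[OF X] by (simp add: right_diff_distrib[symmetric])
  also have "\<bar>\<dots>\<bar> = \<bar>\<beta>\<bar> * \<bar>a s X\<bar> * \<bar>u - v\<bar>" by (simp add: abs_mult)
  also have "\<dots> \<le> \<bar>\<beta>\<bar> * A X * \<bar>u - v\<bar>"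
    using aA[OF s X] by (intro mult_right_mono mult_left_mono) auto
  finally show "\<bar>\<beta> * e s (g(X:=u)) - \<beta> * e s (g(X:=v))\<bar> \<le> \<bar>\<beta>\<bar> * A X * \<bar>u - v\<bar>" .
qed

lemma lf_lower: "s \<in> S \<Longrightarrow> \<beta> * e s g \<le> lf \<beta> g"
proof -
  assume s: "s \<in> S"
  have "exp (\<beta> * e s g) \<le> Zf \<beta> g" unfolding Zf_def
    using finS s by (intro member_le_sum) auto
  then have "ln (exp (\<beta> * e s g)) \<le> ln (Zf \<beta> g)" using Zf_pos by (subst ln_le_cancel_iff) auto
  then show ?thesis unfolding lf_def by simp
qed

lemma lf_abs: "\<bar>lf \<beta> g\<bar> \<le> ln (card S) + \<bar>\<beta>\<bar> * Ag g"
proof -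
  obtain s0 where s0: "s0 \<in> S" using neS by auto
  have "\<beta> * e s0 g \<ge> - (\<bar>\<beta>\<bar> * Ag g)"
    using e_bound[OF s0, of g] by (smt (verit) abs_mult abs_le_iff mult_left_mono abs_ge_zero)
  then have lo: "lf \<beta> g \<ge> - (\<bar>\<beta>\<bar> * Ag g)" using lf_lower[OF s0, of \<beta> g] by linarith
  have "Zf \<beta> g \<le> (\<Sum>s\<in>S. exp (\<bar>\<beta>\<bar> * Ag g))" unfolding Zf_def
  proof (rule sum_mono)
    fix s assume "s \<in> S"
    then have "\<beta> * e s g \<le> \<bar>\<beta>\<bar> * Ag g"
      using e_bound[of s g] by (smt (verit) abs_mult abs_le_iff mult_left_mono abs_ge_zero)
    then show "exp (\<beta> * e s g) \<le> exp (\<bar>\<beta>\<bar> * Ag g)" by simp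
  qed
  also have "\<dots> = real (card S) * exp (\<bar>\<beta>\<bar> * Ag g)" by simp
  finally have "lf \<beta> g \<le> ln (real (card S) * exp (\<bar>\<beta>\<bar> * Ag g))"
    unfolding lf_def using Zf_pos[of \<beta> g] finS neS by (subst ln_le_cancel_iff) (auto simp: card_gt_0_iff)
  also have "\<dots> = ln (card S) + \<bar>\<beta>\<bar> * Ag g"
    using finS neS by (subst ln_mult) (auto simp: card_gt_0_iff)
  finally have up: "lf \<beta> g \<le> ln (card S) + \<bar>\<beta>\<bar> * Ag g" .
  have "0 \<le> ln (real (card S))" using finS neS by (simp add: card_gt_0_iff Suc_le_eq)
  then show ?thesis using lo up by (simp add: abs_le_iff)
qed

lemma lf_zero: "lf 0 g = ln (card S)"
  unfolding lf_def Zf_def by simp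

lemma om_abs: "\<bar>om \<beta> g\<bar> \<le> Ag g"
proof -
  have "\<bar>Nf \<beta> g\<bar> \<le> (\<Sum>s\<in>S. \<bar>e s g * exp (\<beta> * e s g)\<bar>)" unfolding Nf_def by (rule sum_abs)
  also have "\<dots> \<le> (\<Sum>s\<in>S. Ag g * exp (\<beta> * e s g))"
    by (rule sum_mono) (use e_bound in \<open>auto simp: abs_mult intro: mult_right_mono\<close>)
  also have "\<dots> = Ag g * Zf \<beta> g" unfolding Zf_def by (simp add: sum_distrib_left)
  finally have nb: "\<bar>Nf \<beta> g\<bar> \<le> Ag g * Zf \<beta> g" .
  have "\<bar>om \<beta> g\<bar> = \<bar>Nf \<beta> g\<bar> / Zf \<beta> g" unfolding om_def using Zf_pos[of \<beta> g] by (simp add: abs_divide)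
  also have "\<dots> \<le> Ag g" using nb Zf_pos[of \<beta> g] by (simp add: pos_divide_le_eq)
  finally show ?thesis .
qed

lemma Zf_deriv: "((\<lambda>b. Zf b g) has_real_derivative Nf \<beta> g) (at \<beta>)"
  unfolding Zf_def Nf_def by (auto intro!: derivative_eq_intros simp: mult.commute)

lemma Nf_deriv: "((\<lambda>b. Nf b g) has_real_derivative N2 \<beta> g) (at \<beta>)"
  unfolding N2_def Nf_def by (auto intro!: derivative_eq_intros simp: power2_eq_square mult.commute mult.left_commute)

lemma lf_deriv: "((\<lambda>b. lf b g) has_real_derivative om \<beta> g) (at \<beta>)"
  unfolding lf_def om_def
  using Zf_pos[of \<beta> g] by (auto intro!: derivative_eq_intros Zf_deriv simp: field_simps)

lemma CS: "(Nf \<beta> g)\<^sup>2 \<le> N2 \<beta> g * Zf \<beta> g"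
proof -
  define w where "w s = exp (\<beta> * e s g)" for s
  define m where "m = Nf \<beta> g / Zf \<beta> g"
  have Z: "Zf \<beta> g = (\<Sum>s\<in>S. w s)" unfolding Zf_def w_def ..
  have N: "Nf \<beta> g = (\<Sum>s\<in>S. e s g * w s)" unfolding Nf_def w_def ..
  have N2': "N2 \<beta> g = (\<Sum>s\<in>S. (e s g)\<^sup>2 * w s)" unfolding N2_def w_def ..
  have "0 \<le> (\<Sum>s\<in>S. w s * (e s g - m)\<^sup>2)" unfolding w_def by (intro sum_nonneg) auto
  also have "\<dots> = (\<Sum>s\<in>S. (e s g)\<^sup>2 * w s) - 2 * m * (\<Sum>s\<in>S. e s g * w s) + m\<^sup>2 * (\<Sum>s\<in>S. w s)"
    by (simp add: power2_diff algebra_simps sum_subtractf sum.distrib sum_distrib_left sum_distrib_right)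
  also have "\<dots> = N2 \<beta> g - (Nf \<beta> g)\<^sup>2 / Zf \<beta> g"
    unfolding N2'[symmetric] N[symmetric] Z[symmetric] m_def using Zf_pos[of \<beta> g]
    by (simp add: power2_eq_square field_simps)
  finally show ?thesis using Zf_pos[of \<beta> g] by (simp add: field_simps)
qed

lemma om_deriv: "((\<lambda>b. om b g) has_real_derivative (N2 \<beta> g * Zf \<beta> g - (Nf \<beta> g)\<^sup>2) / (Zf \<beta> g)\<^sup>2) (at \<beta>)"
  unfolding om_def
  using Zf_pos[of \<beta> g] by (auto intro!: derivative_eq_intros Zf_deriv Nf_deriv simp: field_simps power2_eq_square)

lemma om_mono: assumes "x \<le> y" shows "om x g \<le> om y g"
proof (rule DERIV_nonneg_imp_increasing_open[OF assms])
  fix t assume "x < t" "t < y"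
  show "\<exists>d. ((\<lambda>b. om b g) has_real_derivative d) (at t) \<and> 0 \<le> d"
    using om_deriv[of g t] CS[of t g] Zf_pos[of t g] by (intro exI conjI) (auto intro!: divide_nonneg_pos)
next
  show "continuous_on {x..y} (\<lambda>b. om b g)"
    using om_deriv by (intro continuous_at_imp_continuous_on ballI DERIV_isCont) blast
qed

lemma tangent: "lf x g + (y - x) * om x g \<le> lf y g"
proof (cases x y rule: linorder_cases)
  case less
  obtain z where z: "x < z" "z < y" "lf y g - lf x g = (y - x) * om z g"
    using MVT2[OF less, of "\<lambda>b. lf b g" "\<lambda>b. om b g"] lf_deriv by blast
  have "om x g \<le> om z g" using z by (intro om_mono) auto
  then have "(y - x) * om x g \<le> (y - x) * om z g" using less by (intro mult_left_mono) auto
  then show ?thesis using z by linarith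
next
  case equal then show ?thesis by simp
next
  case greater
  obtain z where z: "y < z" "z < x" "lf x g - lf y g = (x - y) * om z g"
    using MVT2[OF greater, of "\<lambda>b. lf b g" "\<lambda>b. om b g"] lf_deriv by blast
  have "om z g \<le> om x g" using z by (intro om_mono) auto
  then have "(x - y) * om z g \<le> (x - y) * om x g" using greater by (intro mult_left_mono) auto
  moreover have "(y - x) * om x g = - ((x - y) * om x g)" by (simp add: algebra_simps)
  ultimately show ?thesis using z by linarith
qed

end

context gmodel begin

abbreviation PG where "PG \<equiv> PiM P (\<lambda>_. GN)"

lemma PG_prob: "prob_space PG" by (rule PiGN_prob[OF finP])

lemma comp_meas: "X \<in> P \<Longrightarrow> (\<lambda>g. g X) \<in> borel_measurable PG"
proof -
  assume X: "X \<in> P"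
  have "(\<lambda>g. g X) \<in> measurable PG GN" by (rule measurable_component_singleton[OF X])
  then show ?thesis by (simp add: measurable_cong_sets[OF refl sets_GN])
qed

lemma e_meas[measurable]: "e s \<in> borel_measurable PG"
  unfolding e_def by (rule borel_measurable_sum) (intro borel_measurable_times borel_measurable_const comp_meas)

lemma Ag_meas[measurable]: "Ag \<in> borel_measurable PG"
  unfolding Ag_def by (rule borel_measurable_sum) (intro borel_measurable_times borel_measurable_const borel_measurable_abs comp_meas)

lemma Zf_meas[measurable]: "Zf \<beta> \<in> borel_measurable PG"
  unfolding Zf_def by measurable

lemma lf_meas[measurable]: "lf \<beta> \<in> borel_measurable PG"
  unfolding lf_def by measurable

lemma om_meas[measurable]: "om \<beta> \<in> borel_measurable PG"
  unfolding om_def Nf_def by measurable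

lemma PG_const_int[simp]: "integrable PG (\<lambda>_. c::real)"
proof -
  interpret prob_space PG by (rule PG_prob)
  show ?thesis by simp
qed

lemma PG_integral_const[simp]: "integral\<^sup>L PG (\<lambda>_. c::real) = c"
proof -
  interpret prob_space PG by (rule PG_prob)
  show ?thesis by (simp add: prob_space)
qed

lemma comp_int:
  fixes h :: "real \<Rightarrow> real"
  assumes X: "X \<in> P" and h: "integrable GN h"
  shows "integrable PG (\<lambda>g. h (g X))" "integral\<^sup>L PG (\<lambda>g. h (g X)) = integral\<^sup>L GN h"
proof -
  interpret product_prob_space "\<lambda>_. GN" P by (rule pps_GN)
  define f where "f i = (\<lambda>t. if i = X then h t else 1)" for i
  have fi: "integrable GN (f i)" for i
    unfolding f_def by (cases "i = X") (use h in auto)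
  have eq: "(\<Prod>i\<in>P. f i (x i)) = h (x X)" for x
    unfolding f_def using finP X by simp
  have "integrable PG (\<lambda>x. \<Prod>i\<in>P. f i (x i))"
    by (rule product_integrable_prod) (use finP fi in auto)
  then show "integrable PG (\<lambda>g. h (g X))" unfolding eq .
  have "integral\<^sup>L PG (\<lambda>g. (\<Prod>i\<in>P. f i (g i))) = (\<Prod>i\<in>P. integral\<^sup>L GN (f i))"
    by (rule product_integral_prod) (use finP fi in auto)
  also have "\<dots> = (\<Prod>i\<in>P. if i = X then integral\<^sup>L GN h else 1)"
    by (rule prod.cong) (auto simp: f_def prob_space.prob_space[OF GN_prob])
  also have "\<dots> = integral\<^sup>L GN h" using finP X by simp
  finally show "integral\<^sup>L PG (\<lambda>g. h (g X)) = integral\<^sup>L GN h" unfolding eq .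
qed

lemma abs_comp_int: "X \<in> P \<Longrightarrow> integrable PG (\<lambda>g. \<bar>g X\<bar>)"
  using comp_int(1)[OF _ GN_int_abs] by simp

lemma id_comp_int: "X \<in> P \<Longrightarrow> integrable PG (\<lambda>g. g X)" "X \<in> P \<Longrightarrow> integral\<^sup>L PG (\<lambda>g. g X) = 0"
  using comp_int[OF _ GN_int_pow[of 1]] GN_mean by simp_all

lemma Ag_int: "integrable PG Ag"
  unfolding Ag_def by (intro Bochner_Integration.integrable_sum integrable_mult_right abs_comp_int)

lemma e_int: "integrable PG (e s)" "integral\<^sup>L PG (e s) = 0"
proof -
  show "integrable PG (e s)"
    unfolding e_def by (intro Bochner_Integration.integrable_sum integrable_mult_right id_comp_int)
  have "integral\<^sup>L PG (e s) = (\<Sum>X\<in>P. a s X * integral\<^sup>L PG (\<lambda>g. g X))"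
    unfolding e_def by (subst Bochner_Integration.integral_sum) (auto intro: id_comp_int)
  also have "\<dots> = 0" by (simp add: id_comp_int)
  finally show "integral\<^sup>L PG (e s) = 0" .
qed

lemma lf_int: "integrable PG (lf \<beta>)"
proof (rule Bochner_Integration.integrable_bound)
  show "integrable PG (\<lambda>g. ln (card S) + \<bar>\<beta>\<bar> * Ag g)"
    using Ag_int by simp
  show "lf \<beta> \<in> borel_measurable PG" by simp
  show "AE g in PG. norm (lf \<beta> g) \<le> norm (ln (card S) + \<bar>\<beta>\<bar> * Ag g)"
    using lf_abs by (auto intro!: AE_I2 order_trans[OF _ abs_ge_self])
qed

lemma om_int: "integrable PG (om \<beta>)"
proof (rule Bochner_Integration.integrable_bound)
  show "integrable PG Ag" by (rule Ag_int)
  show "om \<beta> \<in> borel_measurable PG" by simp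
  show "AE g in PG. norm (om \<beta> g) \<le> norm (Ag g)"
    using om_abs Ag_nonneg by (auto intro!: AE_I2)
qed

lemma expe:
  shows "integrable PG (\<lambda>g. exp (\<beta> * e s g))"
    "integral\<^sup>L PG (\<lambda>g. exp (\<beta> * e s g)) = (\<Prod>X\<in>P. exp ((\<beta> * a s X)\<^sup>2 / 2))"
proof -
  interpret product_prob_space "\<lambda>_. GN" P by (rule pps_GN)
  define f where "f X = (\<lambda>t. exp ((\<beta> * a s X) * t))" for X
  have eq: "exp (\<beta> * e s g) = (\<Prod>X\<in>P. f X (g X))" for g
    unfolding e_def f_def using finP by (simp add: sum_distrib_left exp_sum mult.assoc)
  have fi: "integrable GN (f X)" for X unfolding f_def by (rule GN_mgf_int)
  show "integrable PG (\<lambda>g. exp (\<beta> * e s g))"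
    unfolding eq by (rule product_integrable_prod) (use finP fi in auto)
  show "integral\<^sup>L PG (\<lambda>g. exp (\<beta> * e s g)) = (\<Prod>X\<in>P. exp ((\<beta> * a s X)\<^sup>2 / 2))"
  proof -
    have "integral\<^sup>L PG (\<lambda>g. \<Prod>X\<in>P. f X (g X)) = (\<Prod>X\<in>P. integral\<^sup>L GN (f X))"
      by (rule product_integral_prod) (use finP fi in auto)
    also have "\<dots> = (\<Prod>X\<in>P. exp ((\<beta> * a s X)\<^sup>2 / 2))"
      by (rule prod.cong) (simp_all add: f_def GN_mgf)
    finally show ?thesis unfolding eq .
  qed
qed

lemma expe_le: "s \<in> S \<Longrightarrow> integral\<^sup>L PG (\<lambda>g. exp (\<beta> * e s g)) \<le> exp (\<beta>\<^sup>2 * K / 2)"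
proof -
  assume s: "s \<in> S"
  have "(\<Prod>X\<in>P. exp ((\<beta> * a s X)\<^sup>2 / 2)) = exp (\<Sum>X\<in>P. (\<beta> * a s X)\<^sup>2 / 2)"
    using finP by (simp add: exp_sum)
  also have "\<dots> \<le> exp (\<Sum>X\<in>P. \<beta>\<^sup>2 * (A X)\<^sup>2 / 2)"
  proof (subst exp_le_cancel_iff, rule sum_mono)
    fix X assume X: "X \<in> P"
    have "(a s X)\<^sup>2 \<le> (A X)\<^sup>2" using aA[OF s X] by (metis abs_le_square_iff abs_power2 power2_abs sqb)
    then show "(\<beta> * a s X)\<^sup>2 / 2 \<le> \<beta>\<^sup>2 * (A X)\<^sup>2 / 2"
      by (simp add: power_mult_distrib mult_left_mono)
  qed
  also have "\<dots> = exp (\<beta>\<^sup>2 * K / 2)" unfolding K_def by (simp add: sum_distrib_left sum_divide_distrib)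
  finally show ?thesis using expe(2) by simp
qed

definition Fb :: "real \<Rightarrow> real" where "Fb \<beta> = integral\<^sup>L PG (lf \<beta>)"
definition mb :: "real \<Rightarrow> real" where "mb \<beta> = integral\<^sup>L PG (om \<beta>)"

lemma Zf_int: "integrable PG (Zf \<beta>)"
  unfolding Zf_def by (intro Bochner_Integration.integrable_sum expe)

lemma Zf_int_le: "integral\<^sup>L PG (Zf \<beta>) \<le> real (card S) * exp (\<beta>\<^sup>2 * K / 2)"
proof -
  have "integral\<^sup>L PG (Zf \<beta>) = (\<Sum>s\<in>S. integral\<^sup>L PG (\<lambda>g. exp (\<beta> * e s g)))"
    unfolding Zf_def by (rule Bochner_Integration.integral_sum) (rule expe)
  also have "\<dots> \<le> (\<Sum>s\<in>S. exp (\<beta>\<^sup>2 * K / 2))" by (rule sum_mono) (rule expe_le)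
  finally show ?thesis by simp
qed

lemma Fb_zero: "Fb 0 = ln (card S)"
  unfolding Fb_def lf_zero using prob_space.prob_space[OF PG_prob] by simp

lemma Fb_nonneg: "0 \<le> Fb \<beta>"
proof -
  obtain s0 where s0: "s0 \<in> S" using neS by auto
  have "integral\<^sup>L PG (\<lambda>g. \<beta> * e s0 g) \<le> Fb \<beta>"
    unfolding Fb_def by (rule integral_mono) (use e_int lf_int lf_lower[OF s0] in auto)
  then show ?thesis using e_int(2)[of s0] by simp
qed

lemma Fb_upper: "Fb \<beta> \<le> ln (card S) + \<beta>\<^sup>2 * K / 2"
proof -
  define c where "c = real (card S) * exp (\<beta>\<^sup>2 * K / 2)"
  have c: "0 < c" unfolding c_def using finS neS by (simp add: card_gt_0_iff)
  have pt: "lf \<beta> g \<le> ln c + Zf \<beta> g / c - 1" for g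
  proof -
    have "ln (Zf \<beta> g / c) \<le> Zf \<beta> g / c - 1" using Zf_pos[of \<beta> g] c by (intro ln_le_minus_one) simp
    then show ?thesis unfolding lf_def using Zf_pos[of \<beta> g] c by (simp add: ln_div)
  qed
  have "Fb \<beta> \<le> integral\<^sup>L PG (\<lambda>g. ln c + Zf \<beta> g / c - 1)"
    unfolding Fb_def by (rule integral_mono) (use lf_int Zf_int pt in auto)
  also have "\<dots> = ln c + integral\<^sup>L PG (Zf \<beta>) / c - 1"
    using Zf_int prob_space.prob_space[OF PG_prob] by simp
  also have "\<dots> \<le> ln c + 1 - 1"
  proof -
    have "integral\<^sup>L PG (Zf \<beta>) \<le> c" unfolding c_def by (rule Zf_int_le)
    then show ?thesis using c by (simp add: divide_le_eq)
  qed
  also have "\<dots> = ln (card S) + \<beta>\<^sup>2 * K / 2"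
    unfolding c_def using finS neS by (simp add: ln_mult card_gt_0_iff)
  finally show ?thesis .
qed

lemma Fb_tangent: "Fb x + (y - x) * mb x \<le> Fb y"
proof -
  have "integral\<^sup>L PG (\<lambda>g. lf x g + (y - x) * om x g) \<le> Fb y"
    unfolding Fb_def by (rule integral_mono) (use lf_int om_int tangent in auto)
  then show ?thesis unfolding Fb_def mb_def using lf_int om_int by simp
qed

lemma mb_mono: "x \<le> y \<Longrightarrow> mb x \<le> mb y"
  unfolding mb_def by (rule integral_mono) (use om_int om_mono in auto)

end

context gmodel begin

lemma K_nonneg: "0 \<le> K" unfolding K_def by (simp add: sum_nonneg)

lemma conc_diff:
  assumes d: "0 < \<delta>"
  shows "integral\<^sup>L PG (\<lambda>g. \<bar>(lf y g - lf x g) / \<delta> - integral\<^sup>L PG (\<lambda>g. (lf y g - lf x g) / \<delta>)\<bar>)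
           \<le> (\<bar>x\<bar> + \<bar>y\<bar>) / \<delta> * sqrt K"
proof -
  define c where "c = (\<bar>x\<bar> + \<bar>y\<bar>) / \<delta>"
  have c0: "0 \<le> c" unfolding c_def using d by simp
  have "integral\<^sup>L PG (\<lambda>g. \<bar>(lf y g - lf x g) / \<delta> - integral\<^sup>L PG (\<lambda>g. (lf y g - lf x g) / \<delta>)\<bar>)
           \<le> sqrt (\<Sum>X\<in>P. (c * A X)\<^sup>2)"
  proof (rule L1_conc[OF finP])
    show "(\<lambda>g. (lf y g - lf x g) / \<delta>) \<in> borel_measurable PG" by simp
    show "integrable PG (\<lambda>g. (lf y g - lf x g) / \<delta>)" using lf_int by simp
    fix g X u v assume X: "X \<in> P"
    have "(lf y (g(X:=u)) - lf x (g(X:=u))) / \<delta> - (lf y (g(X:=v)) - lf x (g(X:=v))) / \<delta>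
        = ((lf y (g(X:=u)) - lf y (g(X:=v))) - (lf x (g(X:=u)) - lf x (g(X:=v)))) / \<delta>"
      by (simp add: diff_divide_distrib)
    also have "\<bar>\<dots>\<bar> \<le> (\<bar>y\<bar> * A X * \<bar>u - v\<bar> + \<bar>x\<bar> * A X * \<bar>u - v\<bar>) / \<delta>"
    proof -
      have "\<bar>(lf y (g(X:=u)) - lf y (g(X:=v))) - (lf x (g(X:=u)) - lf x (g(X:=v)))\<bar>
          \<le> \<bar>lf y (g(X:=u)) - lf y (g(X:=v))\<bar> + \<bar>lf x (g(X:=u)) - lf x (g(X:=v))\<bar>"
        by (rule abs_triangle_ineq4)
      also have "\<dots> \<le> \<bar>y\<bar> * A X * \<bar>u - v\<bar> + \<bar>x\<bar> * A X * \<bar>u - v\<bar>"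
        using lf_lip[OF X, of y g u v] lf_lip[OF X, of x g u v] by linarith
      finally show ?thesis using d by (simp add: abs_divide divide_right_mono)
    qed
    also have "\<dots> = c * A X * \<bar>u - v\<bar>" unfolding c_def by (simp add: algebra_simps add_divide_distrib)
    finally show "\<bar>(lf y (g(X:=u)) - lf x (g(X:=u))) / \<delta> - (lf y (g(X:=v)) - lf x (g(X:=v))) / \<delta>\<bar> \<le> c * A X * \<bar>u - v\<bar>" .
  qed
  also have "(\<Sum>X\<in>P. (c * A X)\<^sup>2) = c\<^sup>2 * K" unfolding K_def by (simp add: power_mult_distrib sum_distrib_left)
  also have "sqrt (c\<^sup>2 * K) = c * sqrt K" using c0 by (simp add: real_sqrt_mult)
  finally show ?thesis unfolding c_def .
qed

lemma main_point:
  assumes d: "0 < \<delta>"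
  shows "integral\<^sup>L PG (\<lambda>g. \<bar>om \<beta> g - mb \<beta>\<bar>)
    \<le> (\<bar>\<beta> + \<delta>\<bar> + 2 * \<bar>\<beta>\<bar> + \<bar>\<beta> - \<delta>\<bar>) / \<delta> * sqrt K + (Fb (\<beta> + \<delta>) - 2 * Fb \<beta> + Fb (\<beta> - \<delta>)) / \<delta>"
proof -
  define Dp where "Dp g = (lf (\<beta> + \<delta>) g - lf \<beta> g) / \<delta>" for g
  define Dm where "Dm g = (lf \<beta> g - lf (\<beta> - \<delta>) g) / \<delta>" for g
  define p where "p = integral\<^sup>L PG Dp"
  define q where "q = integral\<^sup>L PG Dm"
  have iDp: "integrable PG Dp" unfolding Dp_def using lf_int by simp
  have iDm: "integrable PG Dm" unfolding Dm_def using lf_int by simp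
  have p: "p = (Fb (\<beta> + \<delta>) - Fb \<beta>) / \<delta>" unfolding p_def Dp_def Fb_def using lf_int by simp
  have q: "q = (Fb \<beta> - Fb (\<beta> - \<delta>)) / \<delta>" unfolding q_def Dm_def Fb_def using lf_int by simp
  have Dp_ge: "om \<beta> g \<le> Dp g" for g
    using tangent[of \<beta> g "\<beta> + \<delta>"] d unfolding Dp_def by (simp add: le_divide_eq algebra_simps)
  have Dm_le: "Dm g \<le> om \<beta> g" for g
  proof -
    have "lf \<beta> g + (\<beta> - \<delta> - \<beta>) * om \<beta> g \<le> lf (\<beta> - \<delta>) g" by (rule tangent)
    then show ?thesis using d unfolding Dm_def by (simp add: divide_le_eq algebra_simps)
  qed
  have qm: "q \<le> mb \<beta>" unfolding q_def mb_def by (rule integral_mono[OF iDm om_int Dm_le])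
  have mp: "mb \<beta> \<le> p" unfolding p_def mb_def by (rule integral_mono[OF om_int iDp Dp_ge])
  have pt: "\<bar>om \<beta> g - mb \<beta>\<bar> \<le> \<bar>Dp g - p\<bar> + \<bar>Dm g - q\<bar> + (p - q)" for g
    using Dp_ge[of g] Dm_le[of g] qm mp by linarith
  have "integral\<^sup>L PG (\<lambda>g. \<bar>om \<beta> g - mb \<beta>\<bar>) \<le> integral\<^sup>L PG (\<lambda>g. \<bar>Dp g - p\<bar> + \<bar>Dm g - q\<bar> + (p - q))"
    by (rule integral_mono) (use om_int iDp iDm pt in auto)
  also have "\<dots> = integral\<^sup>L PG (\<lambda>g. \<bar>Dp g - p\<bar>) + integral\<^sup>L PG (\<lambda>g. \<bar>Dm g - q\<bar>) + (p - q)"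
    using iDp iDm prob_space.prob_space[OF PG_prob] by simp
  also have "integral\<^sup>L PG (\<lambda>g. \<bar>Dp g - p\<bar>) \<le> (\<bar>\<beta>\<bar> + \<bar>\<beta> + \<delta>\<bar>) / \<delta> * sqrt K"
    unfolding p_def Dp_def by (rule conc_diff[OF d])
  also have "integral\<^sup>L PG (\<lambda>g. \<bar>Dm g - q\<bar>) \<le> (\<bar>\<beta> - \<delta>\<bar> + \<bar>\<beta>\<bar>) / \<delta> * sqrt K"
    unfolding q_def Dm_def by (rule conc_diff[OF d])
  also have "p - q = (Fb (\<beta> + \<delta>) - 2 * Fb \<beta> + Fb (\<beta> - \<delta>)) / \<delta>"
    unfolding p q by (simp add: diff_divide_distrib add_divide_distrib)
  finally show ?thesis by (simp add: add_divide_distrib algebra_simps)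
qed

lemma Fb_lip:
  assumes a0: "0 < a0" and x: "a0 \<le> x" and xy: "x \<le> y" and y: "y \<le> b0" and B: "b0 < B"
  shows "\<bar>Fb y - Fb x\<bar> \<le> max (ln (card S) / a0) ((ln (card S) + B\<^sup>2 * K / 2) / (B - b0)) * (y - x)"
proof -
  define c0 where "c0 = ln (real (card S))"
  have c0: "0 \<le> c0" unfolding c0_def using finS neS by (simp add: card_gt_0_iff Suc_le_eq)
  define U where "U = (c0 + B\<^sup>2 * K / 2) / (B - b0)"
  have U0: "0 \<le> U" unfolding U_def using c0 K_nonneg B by simp
  have lowm: "- (c0 / a0) \<le> mb x"
  proof -
    have "Fb x + (0 - x) * mb x \<le> Fb 0" by (rule Fb_tangent)
    then have "x * mb x \<ge> - c0" using Fb_nonneg[of x] Fb_zero unfolding c0_def by simp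
    moreover have x0: "0 < x" using a0 x by simp
    ultimately have "(- c0) / x \<le> (x * mb x) / x" by (intro divide_right_mono) auto
    then have "mb x \<ge> - (c0 / x)" using x0 by simp
    moreover have "c0 / x \<le> c0 / a0" using a0 x c0 by (simp add: divide_left_mono)
    ultimately show ?thesis by linarith
  qed
  have upm: "mb y \<le> U"
  proof (cases "mb y \<le> 0")
    case True then show ?thesis using U0 by simp
  next
    case False
    have "Fb y + (B - y) * mb y \<le> Fb B" by (rule Fb_tangent)
    then have "(B - y) * mb y \<le> c0 + B\<^sup>2 * K / 2" using Fb_nonneg[of y] Fb_upper[of B] unfolding c0_def by simp
    moreover have "(B - b0) * mb y \<le> (B - y) * mb y" using False y by (intro mult_right_mono) auto
    ultimately have "(B - b0) * mb y \<le> c0 + B\<^sup>2 * K / 2" by simp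
    then show ?thesis unfolding U_def using B by (simp add: le_divide_eq mult.commute)
  qed
  have lo: "Fb y - Fb x \<ge> - (c0 / a0) * (y - x)"
  proof -
    have "Fb x + (y - x) * mb x \<le> Fb y" by (rule Fb_tangent)
    moreover have "- (c0 / a0) * (y - x) \<le> mb x * (y - x)" using lowm xy by (intro mult_right_mono) auto
    ultimately show ?thesis by (simp add: mult.commute)
  qed
  have hi: "Fb y - Fb x \<le> U * (y - x)"
  proof -
    have "Fb y + (x - y) * mb y \<le> Fb x" by (rule Fb_tangent)
    moreover have "mb y * (y - x) \<le> U * (y - x)" using upm xy by (intro mult_right_mono) auto
    ultimately show ?thesis by (simp add: algebra_simps)
  qed
  have "\<bar>Fb y - Fb x\<bar> \<le> max (c0 / a0) U * (y - x)"
  proof -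
    have "(c0 / a0) * (y - x) \<le> max (c0 / a0) U * (y - x)" using xy by (intro mult_right_mono) auto
    moreover have "U * (y - x) \<le> max (c0 / a0) U * (y - x)" using xy by (intro mult_right_mono) auto
    ultimately show ?thesis using lo hi by (simp add: abs_le_iff)
  qed
  then show ?thesis unfolding U_def c0_def .
qed

end

lemma hk_bound:
  fixes f h :: "real \<Rightarrow> real"
  assumes hc: "continuous_on {a..b} h" and fh: "\<And>x. x \<in> {a..b} \<Longrightarrow> \<bar>f x\<bar> \<le> h x"
  shows "\<bar>integral {a..b} f\<bar> \<le> integral {a..b} h"
proof -
  have hi: "h integrable_on {a..b}" by (rule integrable_continuous_interval[OF hc])
  have h0: "0 \<le> integral {a..b} h"
    by (rule integral_nonneg[OF hi]) (use fh in force)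
  show ?thesis
  proof (cases "f integrable_on {a..b}")
    case True
    have "integral {a..b} f \<le> integral {a..b} h"
      by (rule integral_le[OF True hi]) (use fh in force)
    moreover have "integral {a..b} (\<lambda>x. - h x) \<le> integral {a..b} f"
      by (rule integral_le[OF integrable_neg[OF hi] True]) (use fh in force)
    ultimately show ?thesis by (simp add: abs_le_iff)
  next
    case False
    then show ?thesis using h0 by (simp add: not_integrable_integral)
  qed
qed

lemma int_le_const:
  fixes F :: "real \<Rightarrow> real"
  assumes "u \<le> v" "F integrable_on {u..v}" "\<And>t. t \<in> {u..v} \<Longrightarrow> F t \<le> c"
  shows "integral {u..v} F \<le> (v - u) * c"
proof -
  have "integral {u..v} F \<le> integral {u..v} (\<lambda>t. c)"
    by (rule integral_le[OF assms(2)]) (use assms in auto)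
  then show ?thesis using assms(1) by simp
qed

lemma int_ge_const:
  fixes F :: "real \<Rightarrow> real"
  assumes "u \<le> v" "F integrable_on {u..v}" "\<And>t. t \<in> {u..v} \<Longrightarrow> c \<le> F t"
  shows "(v - u) * c \<le> integral {u..v} F"
proof -
  have "integral {u..v} (\<lambda>t. c) \<le> integral {u..v} F"
    by (rule integral_le[OF _ assms(2)]) (use assms in auto)
  then show ?thesis using assms(1) by simp
qed

lemma lip_cont:
  fixes F :: "real \<Rightarrow> real"
  assumes lip: "\<And>x y. x \<in> T \<Longrightarrow> y \<in> T \<Longrightarrow> \<bar>F x - F y\<bar> \<le> L * \<bar>x - y\<bar>"
  shows "continuous_on T F"
proof -
  have L: "\<bar>F x - F y\<bar> \<le> max L 0 * \<bar>x - y\<bar>" if "x \<in> T" "y \<in> T" for x y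
    using lip[OF that] by (smt (verit) abs_ge_zero max.cobounded1 mult_right_mono)
  have "(max L 0)-lipschitz_on T F"
    by (rule lipschitz_onI) (use L in \<open>auto simp: dist_real_def\<close>)
  then show ?thesis by (rule lipschitz_on_continuous_on)
qed

lemma sd_int:
  fixes F :: "real \<Rightarrow> real"
  assumes d: "0 < \<delta>" and ab: "a \<le> b"
    and lip: "\<And>x y. x \<in> {a-\<delta>..b+\<delta>} \<Longrightarrow> y \<in> {a-\<delta>..b+\<delta>} \<Longrightarrow> \<bar>F x - F y\<bar> \<le> L * \<bar>x - y\<bar>"
  shows "integral {a..b} (\<lambda>\<beta>. F (\<beta> + \<delta>) - 2 * F \<beta> + F (\<beta> - \<delta>)) \<le> 4 * L * \<delta>\<^sup>2"
proof -
  have cF: "continuous_on {a-\<delta>..b+\<delta>} F" by (rule lip_cont[OF lip])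
  have iF: "F integrable_on {u..v}" if "a - \<delta> \<le> u" "v \<le> b + \<delta>" for u v
    using integrable_continuous_interval[OF continuous_on_subset[OF cF]] that by auto
  define I where "I u v = integral {u..v} F" for u v
  have sh1: "integral {a..b} (\<lambda>\<beta>. F (\<beta> + \<delta>)) = I (a+\<delta>) (b+\<delta>)"
    using integral_shift_Icc_real[of a b F \<delta>] unfolding I_def by (simp add: o_def add.commute)
  have sh2: "integral {a..b} (\<lambda>\<beta>. F (\<beta> - \<delta>)) = I (a-\<delta>) (b-\<delta>)"
    using integral_shift_Icc_real[of a b F "-\<delta>"] unfolding I_def by (simp add: o_def add.commute)
  have i1: "(\<lambda>\<beta>. F (\<beta> + \<delta>)) integrable_on {a..b}"
    using integrable_on_shift_Icc_real[of F \<delta> a b] iF[of "a+\<delta>" "b+\<delta>"] d by (simp add: o_def add.commute)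
  have i2: "(\<lambda>\<beta>. F (\<beta> - \<delta>)) integrable_on {a..b}"
    using integrable_on_shift_Icc_real[of F "-\<delta>" a b] iF[of "a-\<delta>" "b-\<delta>"] d by (simp add: o_def add.commute)
  have i0: "F integrable_on {a..b}" using iF d by simp
  have "integral {a..b} (\<lambda>\<beta>. F (\<beta> + \<delta>) - 2 * F \<beta> + F (\<beta> - \<delta>))
      = integral {a..b} (\<lambda>\<beta>. F (\<beta> + \<delta>)) - 2 * integral {a..b} F + integral {a..b} (\<lambda>\<beta>. F (\<beta> - \<delta>))"
    using i0 i1 i2 by (simp add: integral_add integral_diff integrable_diff integrable_add integral_mult_right)
  also have "\<dots> = I (a+\<delta>) (b+\<delta>) - 2 * I a b + I (a-\<delta>) (b-\<delta>)" unfolding sh1 sh2 I_def ..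
  also have "\<dots> = I b (b+\<delta>) - I a (a+\<delta>) + I (a-\<delta>) a - I (b-\<delta>) b"
  proof -
    have c1: "I a (a+\<delta>) + I (a+\<delta>) (b+\<delta>) = I a (b+\<delta>)"
      unfolding I_def by (rule Henstock_Kurzweil_Integration.integral_combine) (use d ab iF in auto)
    have c2: "I a b + I b (b+\<delta>) = I a (b+\<delta>)"
      unfolding I_def by (rule Henstock_Kurzweil_Integration.integral_combine) (use d ab iF in auto)
    have c3: "I (a-\<delta>) (b-\<delta>) + I (b-\<delta>) b = I (a-\<delta>) b"
      unfolding I_def by (rule Henstock_Kurzweil_Integration.integral_combine) (use d ab iF in auto)
    have c4: "I (a-\<delta>) a + I a b = I (a-\<delta>) b"
      unfolding I_def by (rule Henstock_Kurzweil_Integration.integral_combine) (use d ab iF in auto)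
    show ?thesis using c1 c2 c3 c4 by linarith
  qed
  also have "\<dots> \<le> \<delta> * (F b + L * \<delta>) - \<delta> * (F a - L * \<delta>) + \<delta> * (F a + L * \<delta>) - \<delta> * (F b - L * \<delta>)"
  proof -
    have L0: "0 \<le> L"
    proof -
      have "0 \<le> \<bar>F (a-\<delta>) - F (b+\<delta>)\<bar>" by simp
      also have "\<dots> \<le> L * \<bar>(a-\<delta>) - (b+\<delta>)\<bar>" using d ab by (intro lip) auto
      finally have "0 \<le> L * \<bar>(a-\<delta>) - (b+\<delta>)\<bar>" .
      moreover have "0 < \<bar>(a-\<delta>) - (b+\<delta>)\<bar>" using d ab by simp
      ultimately show ?thesis by (simp add: zero_le_mult_iff)
    qed
    have near: "\<bar>F t - F u\<bar> \<le> L * \<delta>" if "t \<in> {a-\<delta>..b+\<delta>}" "u \<in> {a-\<delta>..b+\<delta>}" "\<bar>t - u\<bar> \<le> \<delta>" for t u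
    proof -
      have "\<bar>F t - F u\<bar> \<le> L * \<bar>t - u\<bar>" by (rule lip[OF that(1,2)])
      also have "\<dots> \<le> L * \<delta>" using that(3) L0 by (rule mult_left_mono)
      finally show ?thesis .
    qed
    have b1: "I b (b+\<delta>) \<le> \<delta> * (F b + L * \<delta>)"
    proof -
      have "I b (b+\<delta>) \<le> ((b+\<delta>) - b) * (F b + L * \<delta>)"
        unfolding I_def proof (rule int_le_const)
        fix t assume t: "t \<in> {b..b+\<delta>}"
        have "\<bar>F t - F b\<bar> \<le> L * \<delta>" by (rule near) (use t d ab in auto)
        then show "F t \<le> F b + L * \<delta>" by linarith
      qed (use d ab iF in auto)
      then show ?thesis by simp
    qed
    have b2: "\<delta> * (F a - L * \<delta>) \<le> I a (a+\<delta>)"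
    proof -
      have "((a+\<delta>) - a) * (F a - L * \<delta>) \<le> I a (a+\<delta>)"
        unfolding I_def proof (rule int_ge_const)
        fix t assume t: "t \<in> {a..a+\<delta>}"
        have "\<bar>F t - F a\<bar> \<le> L * \<delta>" by (rule near) (use t d ab in auto)
        then show "F a - L * \<delta> \<le> F t" by linarith
      qed (use d ab iF in auto)
      then show ?thesis by simp
    qed
    have b3: "I (a-\<delta>) a \<le> \<delta> * (F a + L * \<delta>)"
    proof -
      have "I (a-\<delta>) a \<le> (a - (a-\<delta>)) * (F a + L * \<delta>)"
        unfolding I_def proof (rule int_le_const)
        fix t assume t: "t \<in> {a-\<delta>..a}"
        have "\<bar>F t - F a\<bar> \<le> L * \<delta>" by (rule near) (use t d ab in auto)
        then show "F t \<le> F a + L * \<delta>" by linarith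
      qed (use d ab iF in auto)
      then show ?thesis by simp
    qed
    have b4: "\<delta> * (F b - L * \<delta>) \<le> I (b-\<delta>) b"
    proof -
      have "(b - (b-\<delta>)) * (F b - L * \<delta>) \<le> I (b-\<delta>) b"
        unfolding I_def proof (rule int_ge_const)
        fix t assume t: "t \<in> {b-\<delta>..b}"
        have "\<bar>F t - F b\<bar> \<le> L * \<delta>" by (rule near) (use t d ab in auto)
        then show "F b - L * \<delta> \<le> F t" by linarith
      qed (use d ab iF in auto)
      then show ?thesis by simp
    qed
    show ?thesis using b1 b2 b3 b4 by linarith
  qed
  also have "\<dots> = 4 * L * \<delta>\<^sup>2" by (simp add: algebra_simps power2_eq_square)
  finally show ?thesis .
qed

definition SS :: "'s set \<Rightarrow> ('r::finite \<Rightarrow> 's \<Rightarrow> real) set" where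
  "SS \<Lambda> = PiE UNIV (\<lambda>_. configs \<Lambda>)"

definition aa :: "('s set \<Rightarrow> real) \<Rightarrow> ('r::finite \<Rightarrow> 's \<Rightarrow> real) \<Rightarrow> 's set \<Rightarrow> real" where
  "aa Delta s X = Delta X * (\<Sum>k\<in>UNIV. spinprod (s k) X)"

definition EE :: "'s set \<Rightarrow> ('s set \<Rightarrow> real) \<Rightarrow> ('r::finite \<Rightarrow> 's \<Rightarrow> real) \<Rightarrow> ('s set \<Rightarrow> real) \<Rightarrow> real" where
  "EE \<Lambda> Delta s g = (\<Sum>X\<in>Pow \<Lambda>. aa Delta s X * g X)"

lemma configs_finite: "finite \<Lambda> \<Longrightarrow> finite (configs \<Lambda>)"
  unfolding configs_def by (intro finite_PiE) auto

lemma configs_ne: "configs \<Lambda> \<noteq> {}"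
  unfolding configs_def by (simp add: PiE_eq_empty_iff)

lemma configs_card: "finite \<Lambda> \<Longrightarrow> card (configs \<Lambda>) = 2 ^ card \<Lambda>"
  unfolding configs_def by (simp add: card_PiE numeral_2_eq_2)

lemma SS_finite: "finite \<Lambda> \<Longrightarrow> finite (SS \<Lambda>)"
  unfolding SS_def by (intro finite_PiE) (auto simp: configs_finite)

lemma SS_ne: "SS \<Lambda> \<noteq> {}"
  unfolding SS_def by (simp add: PiE_eq_empty_iff configs_ne)

lemma SS_card: "finite \<Lambda> \<Longrightarrow> card (SS \<Lambda> :: ('r::finite \<Rightarrow> 's \<Rightarrow> real) set) = (2 ^ card \<Lambda>) ^ CARD('r)"
  unfolding SS_def by (simp add: card_PiE configs_card)

lemma spin_abs: "\<sigma> \<in> configs \<Lambda> \<Longrightarrow> X \<subseteq> \<Lambda> \<Longrightarrow> \<bar>spinprod \<sigma> X\<bar> \<le> 1"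
proof -
  assume \<sigma>: "\<sigma> \<in> configs \<Lambda>" and X: "X \<subseteq> \<Lambda>"
  have "\<bar>\<sigma> i\<bar> = 1" if "i \<in> X" for i
  proof -
    have "\<sigma> i \<in> {-1, 1}" using \<sigma> X that unfolding configs_def by (auto simp: PiE_def Pi_def)
    then show ?thesis by auto
  qed
  then have "\<bar>\<Prod>i\<in>X. \<sigma> i\<bar> = 1" by (simp add: abs_prod)
  then show ?thesis unfolding spinprod_def by auto
qed

lemma aa_bound: "s \<in> SS \<Lambda> \<Longrightarrow> X \<in> Pow \<Lambda> \<Longrightarrow> \<bar>aa Delta (s :: 'r::finite \<Rightarrow> 's \<Rightarrow> real) X\<bar> \<le> real CARD('r) * \<bar>Delta X\<bar>"
proof -
  assume s: "s \<in> SS \<Lambda>" and X: "X \<in> Pow \<Lambda>"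
  have "\<bar>\<Sum>k\<in>UNIV. spinprod (s k) X\<bar> \<le> (\<Sum>k\<in>(UNIV::'r set). \<bar>spinprod (s k) X\<bar>)" by (rule sum_abs)
  also have "\<dots> \<le> (\<Sum>k\<in>(UNIV::'r set). 1)"
    by (rule sum_mono) (use s X in \<open>auto simp: SS_def PiE_def Pi_def intro!: spin_abs\<close>)
  finally have "\<bar>\<Sum>k\<in>UNIV. spinprod (s k) X\<bar> \<le> real CARD('r)" by simp
  then show ?thesis unfolding aa_def by (simp add: abs_mult mult.commute mult_left_mono)
qed

lemma Ham_sum: "(\<Sum>k\<in>UNIV. Ham \<Lambda> Delta g ((s :: 'r::finite \<Rightarrow> 's \<Rightarrow> real) k)) = - EE \<Lambda> Delta s g"
proof -
  have "(\<Sum>k\<in>UNIV. Ham \<Lambda> Delta g (s k)) = - (\<Sum>k\<in>UNIV. \<Sum>X\<in>Pow \<Lambda>. Delta X * g X * spinprod (s k) X)"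
    unfolding Ham_def by (simp add: sum_negf)
  also have "(\<Sum>k\<in>UNIV. \<Sum>X\<in>Pow \<Lambda>. Delta X * g X * spinprod (s k) X) = (\<Sum>X\<in>Pow \<Lambda>. \<Sum>k\<in>UNIV. Delta X * g X * spinprod (s k) X)"
    by (rule sum.swap)
  also have "\<dots> = EE \<Lambda> Delta s g"
    unfolding EE_def aa_def by (rule sum.cong) (simp_all add: sum_distrib_left mult_ac)
  finally show ?thesis .
qed

lemma Zpart_pow:
  assumes "finite \<Lambda>"
  shows "(Zpart \<Lambda> Delta \<beta> g) ^ CARD('r) = (\<Sum>s\<in>(SS \<Lambda> :: ('r::finite \<Rightarrow> 's \<Rightarrow> real) set). exp (\<beta> * EE \<Lambda> Delta s g))"
proof -
  have "(Zpart \<Lambda> Delta \<beta> g) ^ CARD('r) = (\<Prod>k\<in>(UNIV::'r set). \<Sum>\<sigma>\<in>configs \<Lambda>. exp (- \<beta> * Ham \<Lambda> Delta g \<sigma>))"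
    unfolding Zpart_def by simp
  also have "\<dots> = (\<Sum>s\<in>(SS \<Lambda> :: ('r \<Rightarrow> 's \<Rightarrow> real) set). \<Prod>k\<in>UNIV. exp (- \<beta> * Ham \<Lambda> Delta g (s k)))"
    unfolding SS_def by (rule prod_sum_PiE) (auto simp: configs_finite assms)
  also have "\<dots> = (\<Sum>s\<in>(SS \<Lambda> :: ('r \<Rightarrow> 's \<Rightarrow> real) set). exp (\<beta> * EE \<Lambda> Delta s g))"
  proof (rule sum.cong[OF refl])
    fix s :: "'r \<Rightarrow> 's \<Rightarrow> real"
    have "(\<Prod>k\<in>UNIV. exp (- \<beta> * Ham \<Lambda> Delta g (s k))) = exp (\<Sum>k\<in>UNIV. - \<beta> * Ham \<Lambda> Delta g (s k))"
      by (simp add: exp_sum)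
    also have "(\<Sum>k\<in>UNIV. - \<beta> * Ham \<Lambda> Delta g (s k)) = - \<beta> * (\<Sum>k\<in>UNIV. Ham \<Lambda> Delta g (s k))"
      by (simp add: sum_distrib_left)
    also have "\<dots> = \<beta> * EE \<Lambda> Delta s g" by (simp add: Ham_sum)
    finally show "(\<Prod>k\<in>UNIV. exp (- \<beta> * Ham \<Lambda> Delta g (s k))) = exp (\<beta> * EE \<Lambda> Delta s g)" .
  qed
  finally show ?thesis .
qed

lemma Omega_eq:
  assumes "finite \<Lambda>"
  shows "Omega \<Lambda> Delta \<beta> g (F :: ('r::finite \<Rightarrow> 's \<Rightarrow> real) \<Rightarrow> real)
    = (\<Sum>s\<in>SS \<Lambda>. F s * exp (\<beta> * EE \<Lambda> Delta s g)) / (\<Sum>s\<in>(SS \<Lambda> :: ('r \<Rightarrow> 's \<Rightarrow> real) set). exp (\<beta> * EE \<Lambda> Delta s g))"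
  unfolding Omega_def Zpart_pow[OF assms] unfolding SS_def[symmetric]
  by (simp add: Ham_sum)

lemma Omega_sum:
  "(\<Sum>l\<in>L. Omega \<Lambda> Delta \<beta> g (F l)) = Omega \<Lambda> Delta \<beta> g (\<lambda>s. \<Sum>l\<in>L. F l s)"
  unfolding Omega_def by (simp add: sum_divide_distrib[symmetric] sum_distrib_right sum.swap[of _ L])

lemma Omega_cong: "(\<And>s. s \<in> SS \<Lambda> \<Longrightarrow> F s = F' s) \<Longrightarrow> Omega \<Lambda> Delta \<beta> g F = Omega \<Lambda> Delta \<beta> g F'"
  unfolding Omega_def SS_def by (intro arg_cong2[where f="(/)"] sum.cong) auto

lemma Omega_bound:
  assumes fin: "finite \<Lambda>" and bd: "\<And>s. s \<in> SS \<Lambda> \<Longrightarrow> \<bar>F s\<bar> \<le> B"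
  shows "\<bar>Omega \<Lambda> Delta \<beta> g (F :: ('r::finite \<Rightarrow> 's \<Rightarrow> real) \<Rightarrow> real)\<bar> \<le> B"
proof -
  define w where "w s = exp (\<beta> * EE \<Lambda> Delta s g)" for s :: "'r \<Rightarrow> 's \<Rightarrow> real"
  have Zp: "0 < (\<Sum>s\<in>(SS \<Lambda> :: ('r \<Rightarrow> 's \<Rightarrow> real) set). w s)"
    unfolding w_def using SS_finite[OF fin] SS_ne by (intro sum_pos) auto
  have "\<bar>\<Sum>s\<in>SS \<Lambda>. F s * w s\<bar> \<le> (\<Sum>s\<in>SS \<Lambda>. \<bar>F s * w s\<bar>)" by (rule sum_abs)
  also have "\<dots> \<le> (\<Sum>s\<in>SS \<Lambda>. B * w s)"
    by (rule sum_mono) (use bd in \<open>auto simp: w_def abs_mult intro: mult_right_mono\<close>)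
  also have "\<dots> = B * (\<Sum>s\<in>SS \<Lambda>. w s)" by (simp add: sum_distrib_left)
  finally have nb: "\<bar>\<Sum>s\<in>SS \<Lambda>. F s * w s\<bar> \<le> B * (\<Sum>s\<in>(SS \<Lambda> :: ('r \<Rightarrow> 's \<Rightarrow> real) set). w s)" .
  have "\<bar>Omega \<Lambda> Delta \<beta> g F\<bar> = \<bar>\<Sum>s\<in>SS \<Lambda>. F s * w s\<bar> / (\<Sum>s\<in>(SS \<Lambda> :: ('r \<Rightarrow> 's \<Rightarrow> real) set). w s)"
    unfolding Omega_eq[OF fin] w_def[symmetric] using Zp by (simp add: abs_divide)
  also have "\<dots> \<le> B" using nb Zp by (simp add: pos_divide_le_eq)
  finally show ?thesis .
qed

locale boxctx =
  fixes \<Lambda> :: "'s set" and Delta :: "'s set \<Rightarrow> real" and rr :: "'r::finite itself"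
  assumes fin: "finite \<Lambda>" and ne: "\<Lambda> \<noteq> {}"
begin

sublocale M: gmodel "SS \<Lambda> :: ('r \<Rightarrow> 's \<Rightarrow> real) set" "Pow \<Lambda>" "aa Delta" "\<lambda>X. real CARD('r) * \<bar>Delta X\<bar>"
  by unfold_locales (auto simp: SS_finite[OF fin] SS_ne fin aa_bound)

definition nn :: real where "nn = real (card \<Lambda>)"

lemma nn_pos: "0 < nn" unfolding nn_def using fin ne by (simp add: card_gt_0_iff)

lemma Jm: "Jmeasure \<Lambda> = M.PG" unfolding Jmeasure_def GN_def ..

lemma e_eq: "M.e s g = EE \<Lambda> Delta s g" unfolding M.e_def EE_def ..

lemma Omega_M: "Omega \<Lambda> Delta \<beta> g F = (\<Sum>s\<in>SS \<Lambda>. F s * exp (\<beta> * M.e s g)) / M.Zf \<beta> g"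
  unfolding Omega_eq[OF fin] M.Zf_def e_eq ..

lemma Ham_meas[measurable]: "(\<lambda>g. Ham \<Lambda> Delta g \<sigma>) \<in> borel_measurable M.PG"
  unfolding Ham_def by (auto intro!: borel_measurable_sum borel_measurable_times M.comp_meas)

lemma R1: "1 \<le> real CARD('r)" by simp

lemma Ham_abs: "\<bar>Ham \<Lambda> Delta g \<sigma>\<bar> \<le> M.Ag g" if "\<sigma> \<in> configs \<Lambda>"
proof -
  have "\<bar>Ham \<Lambda> Delta g \<sigma>\<bar> \<le> (\<Sum>X\<in>Pow \<Lambda>. \<bar>Delta X * g X * spinprod \<sigma> X\<bar>)"
    unfolding Ham_def abs_minus_cancel by (rule sum_abs)
  also have "\<dots> \<le> M.Ag g" unfolding M.Ag_def
  proof (rule sum_mono)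
    fix X assume X: "X \<in> Pow \<Lambda>"
    have "\<bar>spinprod \<sigma> X\<bar> \<le> 1" using spin_abs[OF that] X by auto
    then have "\<bar>Delta X * g X * spinprod \<sigma> X\<bar> \<le> \<bar>Delta X\<bar> * \<bar>g X\<bar> * 1"
      unfolding abs_mult by (intro mult_left_mono) auto
    also have "\<dots> \<le> real CARD('r) * \<bar>Delta X\<bar> * \<bar>g X\<bar>"
      using mult_right_mono[OF R1, of "\<bar>Delta X\<bar> * \<bar>g X\<bar>"] by (simp add: mult.assoc)
    finally show "\<bar>Delta X * g X * spinprod \<sigma> X\<bar> \<le> real CARD('r) * \<bar>Delta X\<bar> * \<bar>g X\<bar>" .
  qed
  finally show ?thesis .
qed

definition U :: "'r \<Rightarrow> real \<Rightarrow> ('s set \<Rightarrow> real) \<Rightarrow> real" where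
  "U l \<beta> g = Omega \<Lambda> Delta \<beta> g (\<lambda>s. Ham \<Lambda> Delta g (s l) / real (card \<Lambda>))"

definition W :: "(real^'r^'r \<Rightarrow> real) \<Rightarrow> real \<Rightarrow> ('s set \<Rightarrow> real) \<Rightarrow> real" where
  "W G \<beta> g = Omega \<Lambda> Delta \<beta> g (obs \<Lambda> Delta G)"

lemma U_meas[measurable]: "U l \<beta> \<in> borel_measurable M.PG"
  unfolding U_def Omega_M by measurable

lemma W_meas[measurable]: "W G \<beta> \<in> borel_measurable M.PG"
  unfolding W_def Omega_M by measurable

lemma U_abs: "\<bar>U l \<beta> g\<bar> \<le> M.Ag g / nn"
  unfolding U_def
proof (rule Omega_bound[OF fin])
  fix s :: "'r \<Rightarrow> 's \<Rightarrow> real" assume "s \<in> SS \<Lambda>"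
  then have "s l \<in> configs \<Lambda>" unfolding SS_def by (auto simp: PiE_def Pi_def)
  then show "\<bar>Ham \<Lambda> Delta g (s l) / real (card \<Lambda>)\<bar> \<le> M.Ag g / nn"
    using Ham_abs nn_pos unfolding nn_def by (simp add: abs_divide divide_right_mono)
qed

lemma W_abs: "\<forall>M. \<bar>G M\<bar> \<le> 1 \<Longrightarrow> \<bar>W G \<beta> g\<bar> \<le> 1"
  unfolding W_def by (rule Omega_bound[OF fin]) (simp add: obs_def)

lemma U_int: "integrable M.PG (U l \<beta>)"
proof (rule Bochner_Integration.integrable_bound)
  show "integrable M.PG (\<lambda>g. M.Ag g / nn)" using M.Ag_int by simp
  show "U l \<beta> \<in> borel_measurable M.PG" by simp
  show "AE g in M.PG. norm (U l \<beta> g) \<le> norm (M.Ag g / nn)"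
    using U_abs M.Ag_nonneg nn_pos by (auto intro!: AE_I2)
qed

lemma UW_int: "\<forall>M. \<bar>G M\<bar> \<le> 1 \<Longrightarrow> integrable M.PG (\<lambda>g. U l \<beta> g * W G \<beta> g)"
proof (rule Bochner_Integration.integrable_bound)
  assume G: "\<forall>M. \<bar>G M\<bar> \<le> 1"
  show "integrable M.PG (\<lambda>g. M.Ag g / nn)" using M.Ag_int by simp
  show "(\<lambda>g. U l \<beta> g * W G \<beta> g) \<in> borel_measurable M.PG" by simp
  show "AE g in M.PG. norm (U l \<beta> g * W G \<beta> g) \<le> norm (M.Ag g / nn)"
  proof (rule AE_I2)
    fix g
    have "\<bar>U l \<beta> g * W G \<beta> g\<bar> \<le> M.Ag g / nn * 1"
      unfolding abs_mult using U_abs W_abs[OF G] M.Ag_nonneg[of g] nn_pos by (intro mult_mono) auto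
    then show "norm (U l \<beta> g * W G \<beta> g) \<le> norm (M.Ag g / nn)"
      using M.Ag_nonneg nn_pos by simp
  qed
qed

lemma W_int: "\<forall>M. \<bar>G M\<bar> \<le> 1 \<Longrightarrow> integrable M.PG (W G \<beta>)"
proof -
  assume G: "\<forall>M. \<bar>G M\<bar> \<le> 1"
  interpret P: prob_space M.PG by (rule M.PG_prob)
  show ?thesis using W_abs[OF G] by (intro P.integrable_const_bound[where B=1]) auto
qed

lemma omW_int: "\<forall>M. \<bar>G M\<bar> \<le> 1 \<Longrightarrow> integrable M.PG (\<lambda>g. M.om \<beta> g * W G \<beta> g)"
proof (rule Bochner_Integration.integrable_bound)
  assume G: "\<forall>M. \<bar>G M\<bar> \<le> 1"
  show "integrable M.PG M.Ag" by (rule M.Ag_int)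
  show "(\<lambda>g. M.om \<beta> g * W G \<beta> g) \<in> borel_measurable M.PG" by simp
  show "AE g in M.PG. norm (M.om \<beta> g * W G \<beta> g) \<le> norm (M.Ag g)"
  proof (rule AE_I2)
    fix g
    have "\<bar>M.om \<beta> g * W G \<beta> g\<bar> \<le> M.Ag g * 1"
      unfolding abs_mult using M.om_abs W_abs[OF G] M.Ag_nonneg[of g] by (intro mult_mono) auto
    then show "norm (M.om \<beta> g * W G \<beta> g) \<le> norm (M.Ag g)"
      using M.Ag_nonneg by simp
  qed
qed

lemma sumU: "(\<Sum>l\<in>UNIV. U l \<beta> g) = - M.om \<beta> g / nn"
proof -
  have "(\<Sum>l\<in>UNIV. U l \<beta> g) = Omega \<Lambda> Delta \<beta> g (\<lambda>s::'r \<Rightarrow> 's \<Rightarrow> real. \<Sum>l\<in>UNIV. Ham \<Lambda> Delta g (s l) / real (card \<Lambda>))"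
    unfolding U_def by (simp add: Omega_sum)
  also have "\<dots> = Omega \<Lambda> Delta \<beta> g (\<lambda>s::'r \<Rightarrow> 's \<Rightarrow> real. - M.e s g / nn)"
    unfolding nn_def e_eq by (simp add: sum_divide_distrib[symmetric] Ham_sum)
  also have "\<dots> = - M.om \<beta> g / nn"
    unfolding Omega_M M.om_def M.Nf_def
    by (simp add: sum_negf sum_divide_distrib[symmetric] mult.commute)
  finally show ?thesis .
qed

lemma Delta2_eq:
  fixes G :: "real^'r^'r \<Rightarrow> real"
  assumes G: "\<forall>M. \<bar>G M\<bar> \<le> 1"
  shows "Delta2 \<Lambda> Delta G \<beta> = - (1 / nn) * integral\<^sup>L M.PG (\<lambda>g. (M.om \<beta> g - M.mb \<beta>) * W G \<beta> g)"
proof -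
  have "Delta2 \<Lambda> Delta G \<beta> = (\<Sum>l\<in>UNIV. integral\<^sup>L M.PG (\<lambda>g. U l \<beta> g * W G \<beta> g)
      - integral\<^sup>L M.PG (U l \<beta>) * integral\<^sup>L M.PG (W G \<beta>))"
    unfolding Delta2_def Av_def Jm U_def[symmetric] W_def[symmetric] ..
  also have "\<dots> = (\<Sum>l\<in>UNIV. integral\<^sup>L M.PG (\<lambda>g. U l \<beta> g * W G \<beta> g))
      - (\<Sum>l\<in>UNIV. integral\<^sup>L M.PG (U l \<beta>)) * integral\<^sup>L M.PG (W G \<beta>)"
    by (simp add: sum_subtractf sum_distrib_right)
  also have "(\<Sum>l\<in>UNIV. integral\<^sup>L M.PG (\<lambda>g. U l \<beta> g * W G \<beta> g)) = integral\<^sup>L M.PG (\<lambda>g. (\<Sum>l\<in>UNIV. U l \<beta> g) * W G \<beta> g)"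
    by (subst Bochner_Integration.integral_sum[symmetric]) (auto intro: UW_int[OF G] simp: sum_distrib_right)
  also have "(\<Sum>l\<in>UNIV. integral\<^sup>L M.PG (U l \<beta>)) = integral\<^sup>L M.PG (\<lambda>g. \<Sum>l\<in>UNIV. U l \<beta> g)"
    by (subst Bochner_Integration.integral_sum[symmetric]) (auto intro: U_int)
  finally have "Delta2 \<Lambda> Delta G \<beta> = integral\<^sup>L M.PG (\<lambda>g. (- M.om \<beta> g / nn) * W G \<beta> g)
      - integral\<^sup>L M.PG (\<lambda>g. - M.om \<beta> g / nn) * integral\<^sup>L M.PG (W G \<beta>)"
    unfolding sumU .
  also have "\<dots> = - (1 / nn) * (integral\<^sup>L M.PG (\<lambda>g. M.om \<beta> g * W G \<beta> g) - M.mb \<beta> * integral\<^sup>L M.PG (W G \<beta>))"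
    unfolding M.mb_def by (simp add: algebra_simps)
  also have "integral\<^sup>L M.PG (\<lambda>g. M.om \<beta> g * W G \<beta> g) - M.mb \<beta> * integral\<^sup>L M.PG (W G \<beta>)
      = integral\<^sup>L M.PG (\<lambda>g. (M.om \<beta> g - M.mb \<beta>) * W G \<beta> g)"
    using omW_int[OF G] W_int[OF G] by (simp add: left_diff_distrib)
  finally show ?thesis .
qed

lemma Delta2_abs:
  fixes G :: "real^'r^'r \<Rightarrow> real"
  assumes G: "\<forall>M. \<bar>G M\<bar> \<le> 1"
  shows "\<bar>Delta2 \<Lambda> Delta G \<beta>\<bar> \<le> (1 / nn) * integral\<^sup>L M.PG (\<lambda>g. \<bar>M.om \<beta> g - M.mb \<beta>\<bar>)"
proof -
  have "\<bar>integral\<^sup>L M.PG (\<lambda>g. (M.om \<beta> g - M.mb \<beta>) * W G \<beta> g)\<bar> \<le> integral\<^sup>L M.PG (\<lambda>g. \<bar>(M.om \<beta> g - M.mb \<beta>) * W G \<beta> g\<bar>)"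
    by (rule integral_abs_bound)
  also have "\<dots> \<le> integral\<^sup>L M.PG (\<lambda>g. \<bar>M.om \<beta> g - M.mb \<beta>\<bar>)"
  proof (rule integral_mono)
    show "integrable M.PG (\<lambda>g. \<bar>(M.om \<beta> g - M.mb \<beta>) * W G \<beta> g\<bar>)"
      using omW_int[OF G] W_int[OF G] by (simp add: left_diff_distrib)
    show "integrable M.PG (\<lambda>g. \<bar>M.om \<beta> g - M.mb \<beta>\<bar>)" using M.om_int by simp
    fix g
    have "\<bar>(M.om \<beta> g - M.mb \<beta>) * W G \<beta> g\<bar> \<le> \<bar>M.om \<beta> g - M.mb \<beta>\<bar> * 1"
      unfolding abs_mult using W_abs[OF G] by (intro mult_left_mono) auto
    then show "\<bar>(M.om \<beta> g - M.mb \<beta>) * W G \<beta> g\<bar> \<le> \<bar>M.om \<beta> g - M.mb \<beta>\<bar>" by simp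
  qed
  finally have h: "\<bar>integral\<^sup>L M.PG (\<lambda>g. (M.om \<beta> g - M.mb \<beta>) * W G \<beta> g)\<bar> \<le> integral\<^sup>L M.PG (\<lambda>g. \<bar>M.om \<beta> g - M.mb \<beta>\<bar>)" .
  have "\<bar>Delta2 \<Lambda> Delta G \<beta>\<bar> = (1 / nn) * \<bar>integral\<^sup>L M.PG (\<lambda>g. (M.om \<beta> g - M.mb \<beta>) * W G \<beta> g)\<bar>"
    unfolding Delta2_eq[OF G] abs_mult using nn_pos by simp
  also have "\<dots> \<le> (1 / nn) * integral\<^sup>L M.PG (\<lambda>g. \<bar>M.om \<beta> g - M.mb \<beta>\<bar>)"
    using h nn_pos by (intro mult_left_mono) auto
  finally show ?thesis .
qed

end

context boxctx begin

lemma lnS: "ln (real (card (SS \<Lambda> :: ('r \<Rightarrow> 's \<Rightarrow> real) set))) \<le> nn * real CARD('r)"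
proof -
  have "real (card (SS \<Lambda> :: ('r \<Rightarrow> 's \<Rightarrow> real) set)) = 2 ^ (card \<Lambda> * CARD('r))"
    unfolding SS_card[OF fin] by (simp add: power_mult)
  then have "ln (real (card (SS \<Lambda> :: ('r \<Rightarrow> 's \<Rightarrow> real) set))) = real (card \<Lambda> * CARD('r)) * ln 2"
    by (simp add: ln_realpow)
  also have "\<dots> \<le> real (card \<Lambda> * CARD('r)) * 1"
    using ln_2_less_1 by (intro mult_left_mono) auto
  finally show ?thesis unfolding nn_def by simp
qed

lemma K_eq: "M.K = (real CARD('r))\<^sup>2 * (\<Sum>X\<in>Pow \<Lambda>. (Delta X)\<^sup>2)"
  unfolding M.K_def by (simp add: power_mult_distrib sum_distrib_left)

lemma int_bound:
  fixes G :: "real^'r^'r \<Rightarrow> real"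
  assumes G: "\<forall>M. \<bar>G M\<bar> \<le> 1" and b1: "0 < \<beta>1" and b12: "\<beta>1 < \<beta>2"
    and d: "0 < \<delta>" and d2: "\<delta> \<le> \<beta>1 / 2" and d1: "\<delta> \<le> 1"
  defines "Lc \<equiv> max (ln (real (card (SS \<Lambda> :: ('r \<Rightarrow> 's \<Rightarrow> real) set))) / (\<beta>1 / 2))
                 ((ln (real (card (SS \<Lambda> :: ('r \<Rightarrow> 's \<Rightarrow> real) set))) + (\<beta>2 + 2)\<^sup>2 * M.K / 2) / ((\<beta>2 + 2) - (\<beta>2 + 1)))"
  shows "\<bar>integral {\<beta>1..\<beta>2} (Delta2 \<Lambda> Delta G)\<bar> \<le> (\<beta>2 - \<beta>1) * (4 * \<beta>2 * sqrt M.K / \<delta>) / nn + 4 * Lc * \<delta> / nn"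
proof -
  have lip: "\<bar>M.Fb x - M.Fb y\<bar> \<le> Lc * \<bar>x - y\<bar>" if x: "x \<in> {\<beta>1-\<delta>..\<beta>2+\<delta>}" and y: "y \<in> {\<beta>1-\<delta>..\<beta>2+\<delta>}" for x y
  proof (cases "x \<le> y")
    case True
    have "\<bar>M.Fb y - M.Fb x\<bar> \<le> Lc * (y - x)"
      unfolding Lc_def by (rule M.Fb_lip) (use x y True b1 d d2 d1 in auto)
    then show ?thesis using True by (simp add: abs_minus_commute)
  next
    case False
    have "\<bar>M.Fb x - M.Fb y\<bar> \<le> Lc * (x - y)"
      unfolding Lc_def by (rule M.Fb_lip) (use x y False b1 d d2 d1 in auto)
    then show ?thesis using False by simp
  qed
  have cF: "continuous_on {\<beta>1-\<delta>..\<beta>2+\<delta>} M.Fb" by (rule lip_cont[OF lip])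
  define sd where "sd \<beta> = M.Fb (\<beta> + \<delta>) - 2 * M.Fb \<beta> + M.Fb (\<beta> - \<delta>)" for \<beta>
  define c1 where "c1 = (1 / nn) * (4 * \<beta>2 * sqrt M.K / \<delta>)"
  define c2 where "c2 = 1 / (nn * \<delta>)"
  define hb where "hb \<beta> = c1 + c2 * sd \<beta>" for \<beta>
  have csd: "continuous_on {\<beta>1..\<beta>2} sd"
  proof -
    have c_p: "continuous_on {\<beta>1..\<beta>2} (\<lambda>\<beta>. M.Fb (\<beta> + \<delta>))"
      by (rule continuous_on_compose2[OF cF]) (use d in \<open>auto intro!: continuous_intros\<close>)
    have c_m: "continuous_on {\<beta>1..\<beta>2} (\<lambda>\<beta>. M.Fb (\<beta> - \<delta>))"
      by (rule continuous_on_compose2[OF cF]) (use d in \<open>auto intro!: continuous_intros\<close>)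
    have c_0: "continuous_on {\<beta>1..\<beta>2} M.Fb"
      by (rule continuous_on_subset[OF cF]) (use d in auto)
    show ?thesis unfolding sd_def using c_p c_m c_0 by (intro continuous_intros) auto
  qed
  have chb: "continuous_on {\<beta>1..\<beta>2} hb" unfolding hb_def using csd by (intro continuous_intros) auto
  have K0: "0 \<le> M.K" by (rule M.K_nonneg)
  have pt: "\<bar>Delta2 \<Lambda> Delta G \<beta>\<bar> \<le> hb \<beta>" if \<beta>: "\<beta> \<in> {\<beta>1..\<beta>2}" for \<beta>
  proof -
    have bpos: "\<delta> < \<beta>" using \<beta> d2 b1 by auto
    have "\<bar>Delta2 \<Lambda> Delta G \<beta>\<bar> \<le> (1 / nn) * integral\<^sup>L M.PG (\<lambda>g. \<bar>M.om \<beta> g - M.mb \<beta>\<bar>)"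
      by (rule Delta2_abs[OF G])
    also have "\<dots> \<le> (1 / nn) * ((\<bar>\<beta> + \<delta>\<bar> + 2 * \<bar>\<beta>\<bar> + \<bar>\<beta> - \<delta>\<bar>) / \<delta> * sqrt M.K + sd \<beta> / \<delta>)"
      unfolding sd_def using nn_pos by (intro mult_left_mono M.main_point[OF d]) auto
    also have "(\<bar>\<beta> + \<delta>\<bar> + 2 * \<bar>\<beta>\<bar> + \<bar>\<beta> - \<delta>\<bar>) = 4 * \<beta>" using bpos d by simp
    also have "(1 / nn) * (4 * \<beta> / \<delta> * sqrt M.K + sd \<beta> / \<delta>) \<le> (1 / nn) * (4 * \<beta>2 * sqrt M.K / \<delta> + sd \<beta> / \<delta>)"
    proof -
      have "4 * \<beta> / \<delta> * sqrt M.K \<le> 4 * \<beta>2 * sqrt M.K / \<delta>"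
        using \<beta> d K0 by (simp add: divide_right_mono mult_right_mono)
      then show ?thesis using nn_pos by (intro mult_left_mono) auto
    qed
    also have "\<dots> = hb \<beta>" unfolding hb_def c1_def c2_def using nn_pos d by (simp add: field_simps)
    finally show ?thesis .
  qed
  have "\<bar>integral {\<beta>1..\<beta>2} (Delta2 \<Lambda> Delta G)\<bar> \<le> integral {\<beta>1..\<beta>2} hb"
    by (rule hk_bound[OF chb pt])
  also have "integral {\<beta>1..\<beta>2} hb = (\<beta>2 - \<beta>1) * c1 + c2 * integral {\<beta>1..\<beta>2} sd"
  proof -
    have "integral {\<beta>1..\<beta>2} hb = integral {\<beta>1..\<beta>2} (\<lambda>\<beta>. c1) + integral {\<beta>1..\<beta>2} (\<lambda>\<beta>. c2 * sd \<beta>)"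
      unfolding hb_def
      by (rule integral_add) (auto intro!: integrable_continuous_interval continuous_intros csd)
    then show ?thesis using b12 by simp
  qed
  also have "integral {\<beta>1..\<beta>2} sd \<le> 4 * Lc * \<delta>\<^sup>2"
    unfolding sd_def by (rule sd_int[OF d]) (use b12 lip in auto)
  then have "c2 * integral {\<beta>1..\<beta>2} sd \<le> c2 * (4 * Lc * \<delta>\<^sup>2)"
    unfolding c2_def using nn_pos d by (intro mult_left_mono) auto
  then have "(\<beta>2 - \<beta>1) * c1 + c2 * integral {\<beta>1..\<beta>2} sd \<le> (\<beta>2 - \<beta>1) * c1 + c2 * (4 * Lc * \<delta>\<^sup>2)" by simp
  also have "\<dots> = (\<beta>2 - \<beta>1) * (4 * \<beta>2 * sqrt M.K / \<delta>) / nn + 4 * Lc * \<delta> / nn"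
    unfolding c1_def c2_def using nn_pos d by (simp add: field_simps power2_eq_square)
  finally show ?thesis .
qed

end

lemma box_finite:
  fixes \<Lambda> :: "('d::finite \<Rightarrow> int) set"
  assumes "is_box \<Lambda>" shows "finite \<Lambda>"
proof -
  obtain a b where ab: "\<Lambda> = {x. \<forall>i. a i \<le> x i \<and> x i \<le> b i}" using assms unfolding is_box_def by blast
  have "\<Lambda> \<subseteq> PiE UNIV (\<lambda>i. {a i..b i})" unfolding ab by (auto simp: PiE_def Pi_def extensional_def)
  moreover have "finite (PiE (UNIV :: 'd set) (\<lambda>i. {a i..b i}))" by (intro finite_PiE) auto
  ultimately show ?thesis by (rule finite_subset)
qed

theorem lemma5:
  fixes Delta :: "('d::finite \<Rightarrow> int) set \<Rightarrow> real"
    and G :: "real^'r::finite^'r \<Rightarrow> real"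
    and \<beta>1 \<beta>2 :: real
  assumes "translation_invariant Delta"
    and "thermo_stable Delta"
    and "smooth G"
    and "\<forall>M. \<bar>G M\<bar> \<le> 1"
    and "0 < \<beta>1" and "\<beta>1 < \<beta>2"
  shows "\<forall>\<epsilon>>0. \<exists>N. \<forall>\<Lambda>. is_box \<Lambda> \<and> card \<Lambda> \<ge> N \<longrightarrow>
           \<bar>integral {\<beta>1..\<beta>2} (Delta2 \<Lambda> Delta G)\<bar> < \<epsilon>"
proof (intro allI impI)
  fix \<epsilon> :: real assume \<epsilon>: "\<epsilon> > 0"
  have G: "\<forall>M. \<bar>G M\<bar> \<le> 1" and b1: "0 < \<beta>1" and b12: "\<beta>1 < \<beta>2" using assms by auto
  obtain cbar where cbar: "\<And>\<Lambda>. is_box \<Lambda> \<Longrightarrow> (1 / real (card \<Lambda>)) * (\<Sum>X\<in>Pow \<Lambda>. (Delta X)\<^sup>2) \<le> cbar"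
    using assms(2) unfolding thermo_stable_def by blast
  define cb where "cb = max cbar 0"
  have cb0: "0 \<le> cb" unfolding cb_def by simp
  define R where "R = real CARD('r)"
  have R0: "0 < R" unfolding R_def by simp
  define C where "C = max (2 * R / \<beta>1) (R + (\<beta>2 + 2)\<^sup>2 * R\<^sup>2 * cb / 2)"
  have C0: "0 \<le> C"
  proof -
    have "0 \<le> 2 * R / \<beta>1" using R0 b1 by simp
    then show ?thesis unfolding C_def by (simp add: le_max_iff_disj)
  qed
  define \<delta> where "\<delta> = min (\<beta>1 / 2) (min 1 (\<epsilon> / (8 * (C + 1))))"
  have d: "0 < \<delta>" unfolding \<delta>_def using b1 \<epsilon> C0 by simp
  have d2: "\<delta> \<le> \<beta>1 / 2" unfolding \<delta>_def by (rule min.cobounded1)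
  have d1: "\<delta> \<le> 1" unfolding \<delta>_def by (meson min.cobounded1 min.cobounded2 order_trans)
  have d3: "\<delta> \<le> \<epsilon> / (8 * (C + 1))" unfolding \<delta>_def by (meson min.cobounded2 order_trans)
  have small1: "4 * C * \<delta> < \<epsilon> / 2"
  proof -
    have "4 * C * \<delta> \<le> 4 * C * (\<epsilon> / (8 * (C + 1)))" using d3 C0 by (intro mult_left_mono) auto
    also have "\<dots> = (\<epsilon> / 2) * (C / (C + 1))" using C0 by (simp add: field_simps)
    also have "\<dots> < (\<epsilon> / 2) * 1" using C0 \<epsilon> by (intro mult_strict_left_mono) auto
    finally show ?thesis by simp
  qed
  define D where "D = (\<beta>2 - \<beta>1) * 4 * \<beta>2 * R * sqrt cb / \<delta>"
  have D0: "0 \<le> D" unfolding D_def using b1 b12 R0 cb0 d by simp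
  define N where "N = nat \<lceil>(2 * D / \<epsilon>)\<^sup>2\<rceil> + 1"
  show "\<exists>N. \<forall>\<Lambda>. is_box \<Lambda> \<and> card \<Lambda> \<ge> N \<longrightarrow> \<bar>integral {\<beta>1..\<beta>2} (Delta2 \<Lambda> Delta G)\<bar> < \<epsilon>"
  proof (intro exI allI impI)
    fix \<Lambda> :: "('d \<Rightarrow> int) set" assume H: "is_box \<Lambda> \<and> N \<le> card \<Lambda>"
    have fin: "finite \<Lambda>" using H box_finite by blast
    have cardpos: "1 \<le> card \<Lambda>" using H unfolding N_def by simp
    then have ne: "\<Lambda> \<noteq> {}" by auto
    interpret B: boxctx \<Lambda> Delta "TYPE('r)" by unfold_locales (use fin ne in auto)
    have nn: "0 < B.nn" by (rule B.nn_pos)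
    have stab: "(\<Sum>X\<in>Pow \<Lambda>. (Delta X)\<^sup>2) \<le> cb * B.nn"
    proof -
      have "(1 / B.nn) * (\<Sum>X\<in>Pow \<Lambda>. (Delta X)\<^sup>2) \<le> cb"
        using cbar[of \<Lambda>] H unfolding B.nn_def cb_def by auto
      then show ?thesis using nn by (simp add: field_simps)
    qed
    have K: "B.M.K \<le> R\<^sup>2 * (cb * B.nn)"
    proof -
      have "B.M.K = R\<^sup>2 * (\<Sum>X\<in>Pow \<Lambda>. (Delta X)\<^sup>2)" using B.K_eq unfolding R_def .
      then show ?thesis using stab by (simp add: mult_left_mono)
    qed
    define Lc where "Lc = max (ln (real (card (SS \<Lambda> :: ('r \<Rightarrow> ('d \<Rightarrow> int) \<Rightarrow> real) set))) / (\<beta>1 / 2))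
                 ((ln (real (card (SS \<Lambda> :: ('r \<Rightarrow> ('d \<Rightarrow> int) \<Rightarrow> real) set))) + (\<beta>2 + 2)\<^sup>2 * B.M.K / 2) / ((\<beta>2 + 2) - (\<beta>2 + 1)))"
    have bd: "\<bar>integral {\<beta>1..\<beta>2} (Delta2 \<Lambda> Delta G)\<bar> \<le> (\<beta>2 - \<beta>1) * (4 * \<beta>2 * sqrt B.M.K / \<delta>) / B.nn + 4 * Lc * \<delta> / B.nn"
      unfolding Lc_def by (rule B.int_bound[OF G b1 b12 d d2 d1])
    have lnS: "ln (real (card (SS \<Lambda> :: ('r \<Rightarrow> ('d \<Rightarrow> int) \<Rightarrow> real) set))) \<le> B.nn * R"
      unfolding R_def by (rule B.lnS)
    have Lc: "Lc \<le> B.nn * C"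
    proof -
      have a: "ln (real (card (SS \<Lambda> :: ('r \<Rightarrow> ('d \<Rightarrow> int) \<Rightarrow> real) set))) / (\<beta>1 / 2) \<le> B.nn * C"
      proof -
        have "ln (real (card (SS \<Lambda> :: ('r \<Rightarrow> ('d \<Rightarrow> int) \<Rightarrow> real) set))) / (\<beta>1 / 2) \<le> (B.nn * R) / (\<beta>1 / 2)"
          using lnS b1 by (intro divide_right_mono) auto
        also have "\<dots> = B.nn * (2 * R / \<beta>1)" by simp
        also have "\<dots> \<le> B.nn * C" unfolding C_def using nn by (intro mult_left_mono) auto
        finally show ?thesis .
      qed
      have b: "(ln (real (card (SS \<Lambda> :: ('r \<Rightarrow> ('d \<Rightarrow> int) \<Rightarrow> real) set))) + (\<beta>2 + 2)\<^sup>2 * B.M.K / 2) / ((\<beta>2 + 2) - (\<beta>2 + 1)) \<le> B.nn * C"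
      proof -
        have "(\<beta>2 + 2)\<^sup>2 * B.M.K / 2 \<le> (\<beta>2 + 2)\<^sup>2 * (R\<^sup>2 * (cb * B.nn)) / 2"
          using K by (intro divide_right_mono mult_left_mono) auto
        then have "(ln (real (card (SS \<Lambda> :: ('r \<Rightarrow> ('d \<Rightarrow> int) \<Rightarrow> real) set))) + (\<beta>2 + 2)\<^sup>2 * B.M.K / 2) / ((\<beta>2 + 2) - (\<beta>2 + 1))
            \<le> B.nn * R + (\<beta>2 + 2)\<^sup>2 * (R\<^sup>2 * (cb * B.nn)) / 2" using lnS by simp
        also have "\<dots> = B.nn * (R + (\<beta>2 + 2)\<^sup>2 * R\<^sup>2 * cb / 2)" by (simp add: algebra_simps)
        also have "\<dots> \<le> B.nn * C" unfolding C_def using nn by (intro mult_left_mono) auto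
        finally show ?thesis .
      qed
      show ?thesis unfolding Lc_def using a b by simp
    qed
    have t2: "4 * Lc * \<delta> / B.nn \<le> 4 * C * \<delta>"
    proof -
      have "4 * Lc * \<delta> \<le> 4 * (B.nn * C) * \<delta>" using Lc d by (intro mult_right_mono mult_left_mono) auto
      then show ?thesis using nn by (simp add: divide_le_eq mult_ac)
    qed
    have sK: "sqrt B.M.K \<le> R * sqrt cb * sqrt B.nn"
    proof -
      have "sqrt B.M.K \<le> sqrt (R\<^sup>2 * (cb * B.nn))" using K by (rule real_sqrt_le_mono)
      also have "\<dots> = R * sqrt cb * sqrt B.nn" using R0 by (simp add: real_sqrt_mult)
      finally show ?thesis .
    qed
    have t1: "(\<beta>2 - \<beta>1) * (4 * \<beta>2 * sqrt B.M.K / \<delta>) / B.nn \<le> D / sqrt B.nn"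
    proof -
      have "(\<beta>2 - \<beta>1) * (4 * \<beta>2 * sqrt B.M.K / \<delta>) \<le> (\<beta>2 - \<beta>1) * (4 * \<beta>2 * (R * sqrt cb * sqrt B.nn) / \<delta>)"
        using sK b1 b12 d by (intro mult_left_mono divide_right_mono) auto
      also have "\<dots> = D * sqrt B.nn" unfolding D_def using d by (simp add: field_simps)
      finally have "(\<beta>2 - \<beta>1) * (4 * \<beta>2 * sqrt B.M.K / \<delta>) / B.nn \<le> D * sqrt B.nn / B.nn"
        using nn by (intro divide_right_mono) auto
      also have "D * sqrt B.nn / B.nn = D / sqrt B.nn"
      proof -
        define q where "q = sqrt B.nn"
        have q0: "0 < q" using nn unfolding q_def by simp
        have nq: "B.nn = q * q" unfolding q_def using nn by simp
        show ?thesis unfolding q_def[symmetric] nq using q0 by simp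
      qed
      finally show ?thesis .
    qed
    have t1': "D / sqrt B.nn < \<epsilon> / 2"
    proof -
      have "(2 * D / \<epsilon>)\<^sup>2 < B.nn"
      proof -
        have "(2 * D / \<epsilon>)\<^sup>2 \<le> real (nat \<lceil>(2 * D / \<epsilon>)\<^sup>2\<rceil>)" by linarith
        also have "\<dots> < real N" unfolding N_def by simp
        also have "\<dots> \<le> B.nn" unfolding B.nn_def using H by simp
        finally show ?thesis .
      qed
      then have "2 * D / \<epsilon> < sqrt B.nn" by (rule real_less_rsqrt)
      then have "2 * D < \<epsilon> * sqrt B.nn" using \<epsilon> by (simp add: divide_less_eq mult.commute)
      then show ?thesis using nn by (simp add: divide_less_eq mult.commute)
    qed
    show "\<bar>integral {\<beta>1..\<beta>2} (Delta2 \<Lambda> Delta G)\<bar> < \<epsilon>"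
      using bd t1 t1' t2 small1 by linarith
  qed
qed

end
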